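(* Let $(U,A)$ and $(V,A)$ be left Hopf algebroids over the same $\Bbbk$-algebra $A$, let $\pi\colon U\to V$ be a surjective morphism of left Hopf algebroids, and let $B$ be its left Hopf kernel. Then: (i) $B$ is an $A$-subring of $U$ with unit map $s_U\colon A\to B$, and its elements commute with $t_U(A)$, i.e. $b\triangleleft a=t_U(a)\,b=b\,t_U(a)=a\blacktriangleright b$ for all $b\in B$, $a\in A$; (ii) the assignment $u\otimes b\mapsto u\rightharpoonup b:=u_+\,b\,u_-$ is a well-defined left $U$-action $U\otimes B\to B$ (landing in $B$), which descends to ${}_\blacktriangleright U_\blacktriangleleft\otimes_{A^e}{}_\triangleright B_\blacktriangleleft\to B$ and satisfies $u\rightharpoonup1_B=s_U(\varepsilon_U(u))$ and $u\rightharpoonup(bb')=(u_{(1)}\rightharpoonup b)(u_{(2)}\rightharpoonup b')$ for all $u\in U$, $b,b'\in B$; thus $B$ is a left $U$-module algebra.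
   Context: A left bialgebroid $(U,A,\Delta,\varepsilon,s,t)$ over a $\Bbbk$-algebra $A$: $\Bbbk$-algebra $U$ with algebra map $s$ and algebra anti-map $t$ from $A$ with commuting images, four commuting $A$-actions $a\blacktriangleright b\triangleright u\triangleleft c\blacktriangleleft d:=t(c)s(b)\,u\,s(d)t(a)$, a coassociative counital unital multiplicative comultiplication $\Delta\colon U\to U_\triangleleft\otimes_A{}_\triangleright U$, $u\mapsto u_{(1)}\otimes u_{(2)}$, landing in the Takeuchi product (where $a\blacktriangleright u_{(1)}\otimes u_{(2)}=u_{(1)}\otimes u_{(2)}\blacktriangleleft a$), with $\Delta(a\blacktriangleright b\triangleright u\triangleleft c\blacktriangleleft d)=(b\triangleright u_{(1)}\blacktriangleleft d)\otimes(a\blacktriangleright u_{(2)}\triangleleft c)$, and counit $\varepsilon\colon U\to A$ with $\varepsilon(b\triangleright u\triangleleft c)=b\varepsilon(u)c$, $\varepsilon(a\blacktriangleright u)=\varepsilon(u\blacktriangleleft a)$, $\varepsilon(uv)=\varepsilon(u\blacktriangleleft\varepsilon(v))$, $s(\varepsilon(u_{(1)}))u_{(2)}=u=t(\varepsilon(u_{(2)}))u_{(1)}$. It is a left Hopf algebroid if $\beta\colon{}_\blacktriangleright U\otimes_{A^{op}}U_\triangleleft\to U_\triangleleft\otimes_A{}_\triangleright U$, $u\otimes v\mapsto u_{(1)}\otimes u_{(2)}v$ is bijective (the domain being $U\otimes U$ modulo $u\,t(a)\otimes v-u\otimes t(a)v$); write $u_+\otimes u_-:=\beta^{-1}(u\otimes1)$.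 A morphism is an algebra map commuting with $\Delta,\varepsilon,s,t$. The left Hopf kernel of surjective $\pi$ is $B=\{u\in U: u_{(1)}\otimes_A\pi(u_{(2)})=u\otimes_A1_V\}$. *)

theory Defs
  imports Main
begin

text \<open>An element of a tensor product is represented by a finite list of elementary
tensors (a formal sum). Two representatives are equal in the tensor product iff the
difference of their formal sums (as integer-valued finitely supported functions)
lies in the additive subgroup generated by the defining relations of the tensor
product (biadditivity and balancing).\<close>

definition delta :: "'p \<Rightarrow> 'p \<Rightarrow> int" where
  "delta p = (\<lambda>q. if q = p then 1 else 0)"

definition fdiff :: "'p list \<Rightarrow> 'p list \<Rightarrow> 'p \<Rightarrow> int" where
  "fdiff xs ys = (\<lambda>q. int (count_list xs q) - int (count_list ys q))"

inductive_set zspan :: "('p \<Rightarrow> int) set \<Rightarrow> ('p \<Rightarrow> int) set" for G where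
  zspan_zero: "(\<lambda>_. 0) \<in> zspan G"
| zspan_gen: "g \<in> G \<Longrightarrow> g \<in> zspan G"
| zspan_add: "f \<in> zspan G \<Longrightarrow> g \<in> zspan G \<Longrightarrow> (\<lambda>q. f q + g q) \<in> zspan G"
| zspan_neg: "f \<in> zspan G \<Longrightarrow> (\<lambda>q. - f q) \<in> zspan G"

text \<open>Relations of \<open>M_A \<otimes>_A {}_A N\<close>, right action \<open>r\<close> on M, left action \<open>l\<close> on N.\<close>
definition tens_gens :: "('m::ab_group_add \<Rightarrow> 'a \<Rightarrow> 'm) \<Rightarrow> ('a \<Rightarrow> 'n::ab_group_add \<Rightarrow> 'n)
    \<Rightarrow> ('m \<times> 'n \<Rightarrow> int) set" where
  "tens_gens r l =
     {(\<lambda>q. delta (m + m', n) q - delta (m, n) q - delta (m', n) q) | m m' n. True}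
   \<union> {(\<lambda>q. delta (m, n + n') q - delta (m, n) q - delta (m, n') q) | m n n'. True}
   \<union> {(\<lambda>q. delta (r m a, n) q - delta (m, l a n) q) | m a n. True}"

definition teq :: "('m::ab_group_add \<Rightarrow> 'a \<Rightarrow> 'm) \<Rightarrow> ('a \<Rightarrow> 'n::ab_group_add \<Rightarrow> 'n)
    \<Rightarrow> ('m \<times> 'n) list \<Rightarrow> ('m \<times> 'n) list \<Rightarrow> bool" where
  "teq r l xs ys \<longleftrightarrow> fdiff xs ys \<in> zspan (tens_gens r l)"

text \<open>Relations of a triple tensor product \<open>M_A \<otimes>_A {}_A N_A \<otimes>_A {}_A P\<close>.\<close>
definition tens3_gens :: "('m::ab_group_add \<Rightarrow> 'a \<Rightarrow> 'm) \<Rightarrow> ('a \<Rightarrow> 'n::ab_group_add \<Rightarrow> 'n)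
    \<Rightarrow> ('n \<Rightarrow> 'a \<Rightarrow> 'n) \<Rightarrow> ('a \<Rightarrow> 'p::ab_group_add \<Rightarrow> 'p) \<Rightarrow> ('m \<times> 'n \<times> 'p \<Rightarrow> int) set" where
  "tens3_gens r1 l1 r2 l2 =
     {(\<lambda>q. delta (m + m', n, p) q - delta (m, n, p) q - delta (m', n, p) q) | m m' n p. True}
   \<union> {(\<lambda>q. delta (m, n + n', p) q - delta (m, n, p) q - delta (m, n', p) q) | m n n' p. True}
   \<union> {(\<lambda>q. delta (m, n, p + p') q - delta (m, n, p) q - delta (m, n, p') q) | m n p p'. True}
   \<union> {(\<lambda>q. delta (r1 m a, n, p) q - delta (m, l1 a n, p) q) | m a n p. True}
   \<union> {(\<lambda>q. delta (m, r2 n a, p) q - delta (m, n, l2 a p) q) | m a n p. True}"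

definition teq3 :: "('m::ab_group_add \<Rightarrow> 'a \<Rightarrow> 'm) \<Rightarrow> ('a \<Rightarrow> 'n::ab_group_add \<Rightarrow> 'n)
    \<Rightarrow> ('n \<Rightarrow> 'a \<Rightarrow> 'n) \<Rightarrow> ('a \<Rightarrow> 'p::ab_group_add \<Rightarrow> 'p)
    \<Rightarrow> ('m \<times> 'n \<times> 'p) list \<Rightarrow> ('m \<times> 'n \<times> 'p) list \<Rightarrow> bool" where
  "teq3 r1 l1 r2 l2 xs ys \<longleftrightarrow> fdiff xs ys \<in> zspan (tens3_gens r1 l1 r2 l2)"

text \<open>\<open>U_\<triangleleft> \<otimes>_A {}_\<triangleright>W\<close> where \<open>u \<triangleleft> a = t a * u\<close> and \<open>a \<triangleright> w = s' a * w\<close>.\<close>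
definition teqA :: "('a \<Rightarrow> 'u::ring) \<Rightarrow> ('a \<Rightarrow> 'w::ring) \<Rightarrow> ('u \<times> 'w) list \<Rightarrow> ('u \<times> 'w) list \<Rightarrow> bool" where
  "teqA t s' = teq (\<lambda>u a. t a * u) (\<lambda>a w. s' a * w)"

text \<open>\<open>U_\<triangleleft> \<otimes>_A {}_\<triangleright>U_\<triangleleft> \<otimes>_A {}_\<triangleright>U\<close>.\<close>
definition teqA3 :: "('a \<Rightarrow> 'u::ring) \<Rightarrow> ('a \<Rightarrow> 'u) \<Rightarrow> ('u \<times> 'u \<times> 'u) list \<Rightarrow> ('u \<times> 'u \<times> 'u) list \<Rightarrow> bool" where
  "teqA3 s t = teq3 (\<lambda>u a. t a * u) (\<lambda>a u. s a * u) (\<lambda>u a. t a * u) (\<lambda>a u. s a * u)"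

text \<open>\<open>{}_\<blacktriangleright>U \<otimes>_{A^op} U_\<triangleleft>\<close>: relation \<open>u t(a) \<otimes> v = u \<otimes> t(a) v\<close>.\<close>
definition teqAop :: "('a \<Rightarrow> 'u::ring) \<Rightarrow> ('u \<times> 'u) list \<Rightarrow> ('u \<times> 'u) list \<Rightarrow> bool" where
  "teqAop t = teq (\<lambda>u a. u * t a) (\<lambda>a v. t a * v)"

text \<open>The k-algebra \<open>A\<close> is given by the ring \<open>'a\<close> and a ring map \<open>\<iota>\<close> from the commutative
ring \<open>'k\<close> into the centre of \<open>'a\<close>. Rings are unital but not required to be nontrivial.
The k-algebra structure of \<open>U\<close> is \<open>\<lambda> u = s(\<iota> \<lambda>) u\<close> (forced since \<open>s\<close> is a k-algebra map).
The comultiplication is given by a representative \<open>\<Delta> u\<close> (a list of pairs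
\<open>u\<^sub>(\<^sub>1\<^sub>) \<otimes> u\<^sub>(\<^sub>2\<^sub>)\<close>) of an element of \<open>U_\<triangleleft> \<otimes>_A {}_\<triangleright>U\<close>.\<close>

definition k_algebra :: "('k::{comm_ring,monoid_mult} \<Rightarrow> 'a::{ring,monoid_mult}) \<Rightarrow> bool" where
  "k_algebra \<iota> \<longleftrightarrow> (\<forall>c d. \<iota> (c + d) = \<iota> c + \<iota> d) \<and> (\<forall>c d. \<iota> (c * d) = \<iota> c * \<iota> d)
     \<and> \<iota> 1 = 1 \<and> (\<forall>c x. \<iota> c * x = x * \<iota> c)"

definition left_bialgebroid ::
  "('k::{comm_ring,monoid_mult} \<Rightarrow> 'a::{ring,monoid_mult}) \<Rightarrow> ('a \<Rightarrow> 'u::{ring,monoid_mult}) \<Rightarrow> ('a \<Rightarrow> 'u)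
    \<Rightarrow> ('u \<Rightarrow> ('u \<times> 'u) list) \<Rightarrow> ('u \<Rightarrow> 'a) \<Rightarrow> bool" where
  "left_bialgebroid \<iota> s t \<Delta> \<epsilon> \<longleftrightarrow>
     k_algebra \<iota>
   \<comment> \<open>U is a k-algebra (via s \<circ> \<iota>), s a k-algebra map, t a k-algebra anti-map\<close>
   \<and> (\<forall>c u. s (\<iota> c) * u = u * s (\<iota> c))
   \<and> (\<forall>x y. s (x + y) = s x + s y) \<and> (\<forall>x y. s (x * y) = s x * s y) \<and> s 1 = 1
   \<and> (\<forall>x y. t (x + y) = t x + t y) \<and> (\<forall>x y. t (x * y) = t y * t x) \<and> t 1 = 1
   \<and> (\<forall>c. t (\<iota> c) = s (\<iota> c))
   \<comment> \<open>commuting images\<close>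
   \<and> (\<forall>x y. s x * t y = t y * s x)
   \<comment> \<open>comultiplication: additive, into the Takeuchi product, coassociative, unital, multiplicative\<close>
   \<and> (\<forall>u v. teqA t s (\<Delta> (u + v)) (\<Delta> u @ \<Delta> v))
   \<and> (\<forall>u a. teqA t s (map (\<lambda>(x, y). (x * t a, y)) (\<Delta> u)) (map (\<lambda>(x, y). (x, y * s a)) (\<Delta> u)))
   \<and> (\<forall>u. teqA3 s t [(y1, y2, x2). (x1, x2) \<leftarrow> \<Delta> u, (y1, y2) \<leftarrow> \<Delta> x1]
                    [(x1, y1, y2). (x1, x2) \<leftarrow> \<Delta> u, (y1, y2) \<leftarrow> \<Delta> x2])
   \<and> teqA t s (\<Delta> 1) [(1, 1)]
   \<and> (\<forall>u v. teqA t s (\<Delta> (u * v)) [(x1 * y1, x2 * y2). (x1, x2) \<leftarrow> \<Delta> u, (y1, y2) \<leftarrow> \<Delta> v])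
   \<and> (\<forall>a b c d u. teqA t s (\<Delta> (t c * s b * u * s d * t a))
                     (map (\<lambda>(x, y). (s b * x * s d, t c * y * t a)) (\<Delta> u)))
   \<comment> \<open>counit\<close>
   \<and> (\<forall>u v. \<epsilon> (u + v) = \<epsilon> u + \<epsilon> v)
   \<and> (\<forall>b c u. \<epsilon> (t c * s b * u) = b * \<epsilon> u * c)
   \<and> (\<forall>a u. \<epsilon> (u * t a) = \<epsilon> (u * s a))
   \<and> (\<forall>u v. \<epsilon> (u * v) = \<epsilon> (u * s (\<epsilon> v)))
   \<and> (\<forall>u. sum_list (map (\<lambda>(x, y). s (\<epsilon> x) * y) (\<Delta> u)) = u)
   \<and> (\<forall>u. sum_list (map (\<lambda>(x, y). t (\<epsilon> y) * x) (\<Delta> u)) = u)"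

definition galois_map :: "('u::{ring,monoid_mult} \<Rightarrow> ('u \<times> 'u) list) \<Rightarrow> ('u \<times> 'u) list \<Rightarrow> ('u \<times> 'u) list" where
  "galois_map \<Delta> xs = concat (map (\<lambda>(u, v). map (\<lambda>(x1, x2). (x1, x2 * v)) (\<Delta> u)) xs)"

text \<open>\<open>\<beta>\<close> induces a bijection \<open>{}_\<blacktriangleright>U \<otimes>_{A^op} U_\<triangleleft> \<rightarrow> U_\<triangleleft> \<otimes>_A {}_\<triangleright>U\<close>.\<close>
definition left_hopf_algebroid ::
  "('k::{comm_ring,monoid_mult} \<Rightarrow> 'a::{ring,monoid_mult}) \<Rightarrow> ('a \<Rightarrow> 'u::{ring,monoid_mult}) \<Rightarrow> ('a \<Rightarrow> 'u)
    \<Rightarrow> ('u \<Rightarrow> ('u \<times> 'u) list) \<Rightarrow> ('u \<Rightarrow> 'a) \<Rightarrow> bool" where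
  "left_hopf_algebroid \<iota> s t \<Delta> \<epsilon> \<longleftrightarrow>
     left_bialgebroid \<iota> s t \<Delta> \<epsilon>
   \<and> (\<forall>xs ys. teqA t s (galois_map \<Delta> xs) (galois_map \<Delta> ys) \<longrightarrow> teqAop t xs ys)
   \<and> (\<forall>zs. \<exists>xs. teqA t s (galois_map \<Delta> xs) zs)"

text \<open>\<open>u\<^sub>+ \<otimes> u\<^sub>- = \<beta>\<^sup>-\<^sup>1(u \<otimes> 1)\<close>, some chosen representative.\<close>
definition translation :: "('a \<Rightarrow> 'u::{ring,monoid_mult}) \<Rightarrow> ('a \<Rightarrow> 'u) \<Rightarrow> ('u \<Rightarrow> ('u \<times> 'u) list)
    \<Rightarrow> 'u \<Rightarrow> ('u \<times> 'u) list" where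
  "translation s t \<Delta> u = (SOME xs. teqA t s (galois_map \<Delta> xs) [(u, 1)])"

definition hact :: "('a \<Rightarrow> 'u::{ring,monoid_mult}) \<Rightarrow> ('a \<Rightarrow> 'u) \<Rightarrow> ('u \<Rightarrow> ('u \<times> 'u) list)
    \<Rightarrow> 'u \<Rightarrow> 'u \<Rightarrow> 'u" where
  "hact s t \<Delta> u b = sum_list (map (\<lambda>(x, y). x * b * y) (translation s t \<Delta> u))"

definition bialgebroid_morphism ::
  "('a \<Rightarrow> 'u::{ring,monoid_mult}) \<Rightarrow> ('a \<Rightarrow> 'u) \<Rightarrow> ('u \<Rightarrow> ('u \<times> 'u) list) \<Rightarrow> ('u \<Rightarrow> 'a)
   \<Rightarrow> ('a \<Rightarrow> 'v::{ring,monoid_mult}) \<Rightarrow> ('a \<Rightarrow> 'v) \<Rightarrow> ('v \<Rightarrow> ('v \<times> 'v) list) \<Rightarrow> ('v \<Rightarrow> 'a)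
   \<Rightarrow> ('u \<Rightarrow> 'v) \<Rightarrow> bool" where
  "bialgebroid_morphism sU tU \<Delta>U \<epsilon>U sV tV \<Delta>V \<epsilon>V \<pi> \<longleftrightarrow>
     (\<forall>x y. \<pi> (x + y) = \<pi> x + \<pi> y) \<and> (\<forall>x y. \<pi> (x * y) = \<pi> x * \<pi> y) \<and> \<pi> 1 = 1
   \<and> (\<forall>a. \<pi> (sU a) = sV a) \<and> (\<forall>a. \<pi> (tU a) = tV a)
   \<and> (\<forall>u. \<epsilon>V (\<pi> u) = \<epsilon>U u)
   \<and> (\<forall>u. teqA tV sV (\<Delta>V (\<pi> u)) (map (\<lambda>(x, y). (\<pi> x, \<pi> y)) (\<Delta>U u)))"

definition left_hopf_kernel ::
  "('a \<Rightarrow> 'u::{ring,monoid_mult}) \<Rightarrow> ('u \<Rightarrow> ('u \<times> 'u) list) \<Rightarrow> ('a \<Rightarrow> 'v::{ring,monoid_mult})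
   \<Rightarrow> ('u \<Rightarrow> 'v) \<Rightarrow> 'u set" where
  "left_hopf_kernel tU \<Delta>U sV \<pi> =
     {u. teqA tU sV (map (\<lambda>(x, y). (x, \<pi> y)) (\<Delta>U u)) [(u, 1)]}"

end

theory Submission
  imports Defs "HOL-Library.Multiset"
begin


definition zeq :: "('p \<Rightarrow> int) set \<Rightarrow> 'p list \<Rightarrow> 'p list \<Rightarrow> bool" where
  "zeq G xs ys \<longleftrightarrow> fdiff xs ys \<in> zspan G"

lemma fdiff_append: "fdiff (a@b) (c@d) = (\<lambda>q. fdiff a c q + fdiff b d q)"
  by (auto simp: fdiff_def)

lemma zspan_eqI: "f \<in> zspan G \<Longrightarrow> f = g \<Longrightarrow> g \<in> zspan G" by simp

lemma zeq_refl[simp,intro]: "zeq G xs xs"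
proof -
  have "fdiff xs xs = (\<lambda>_. 0)" by (auto simp: fdiff_def)
  then show ?thesis unfolding zeq_def using zspan_zero by metis
qed

lemma zeq_sym: "zeq G xs ys \<Longrightarrow> zeq G ys xs"
  unfolding zeq_def
  by (rule zspan_eqI[OF zspan_neg]) (auto simp: fdiff_def)

lemma zeq_trans: "zeq G xs ys \<Longrightarrow> zeq G ys zs \<Longrightarrow> zeq G xs zs"
proof -
  assume "zeq G xs ys" "zeq G ys zs"
  then have a: "fdiff xs ys \<in> zspan G" "fdiff ys zs \<in> zspan G" by (auto simp: zeq_def)
  have "fdiff xs zs = (\<lambda>q. fdiff xs ys q + fdiff ys zs q)" by (auto simp: fdiff_def)
  then show ?thesis using zspan_add[OF a] by (simp add: zeq_def)
qed

lemma zeq_append: "zeq G a b \<Longrightarrow> zeq G c d \<Longrightarrow> zeq G (a@c) (b@d)"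
  unfolding zeq_def fdiff_append by (rule zspan_add)

lemma zeq_mset: "mset xs = mset ys \<Longrightarrow> zeq G xs ys"
proof -
  assume "mset xs = mset ys"
  then have "fdiff xs ys = (\<lambda>_. 0)"
    by (auto simp: fdiff_def fun_eq_iff simp flip: count_mset)
  then show ?thesis unfolding zeq_def using zspan_zero by metis
qed

lemma zeq_cancel: "zeq G (xs@b) (ys@a) \<Longrightarrow> zeq G a b \<Longrightarrow> zeq G xs ys"
proof -
  assume "zeq G (xs@b) (ys@a)" "zeq G a b"
  then have a: "fdiff (xs@b) (ys@a) \<in> zspan G" "fdiff a b \<in> zspan G" by (auto simp: zeq_def)
  have "fdiff xs ys = (\<lambda>q. fdiff (xs@b) (ys@a) q + fdiff a b q)" by (auto simp: fdiff_def)
  then show ?thesis using zspan_add[OF a] by (simp add: zeq_def)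
qed

lemma zeq_concat: "(\<And>x. x \<in> set xs \<Longrightarrow> zeq G (F x) (H x)) \<Longrightarrow> zeq G (concat (map F xs)) (concat (map H xs))"
  by (induct xs) (auto intro: zeq_append)

lemma zspan_rel:
  assumes ms: "\<And>xs ys. mset xs = mset ys \<Longrightarrow> R xs ys"
   and cancel: "\<And>xs ys a b. R (xs@b) (ys@a) \<Longrightarrow> R a b \<Longrightarrow> R xs ys"
   and app: "\<And>a b c d. R a b \<Longrightarrow> R c d \<Longrightarrow> R (a@c) (b@d)"
   and sym: "\<And>a b. R a b \<Longrightarrow> R b a"
   and gens: "\<And>g. g \<in> G \<Longrightarrow> \<exists>a b. g = fdiff a b \<and> R a b"
   and h: "fdiff xs ys \<in> zspan G"
  shows "R xs ys"
proof -
  have "\<exists>a b. f = fdiff a b \<and> R a b" if "f \<in> zspan G" for f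
    using that
  proof induct
    case zspan_zero
    then show ?case by (intro exI[of _ "[]"]) (auto simp: fdiff_def ms)
  next
    case (zspan_gen g)
    then show ?case by (rule gens)
  next
    case (zspan_add f g)
    then obtain a b a' b' where "f = fdiff a b" "R a b" "g = fdiff a' b'" "R a' b'" by blast
    then show ?case by (intro exI[of _ "a@a'"] exI[of _ "b@b'"]) (auto simp: fdiff_append app)
  next
    case (zspan_neg f)
    then obtain a b where "f = fdiff a b" "R a b" by blast
    then show ?case by (intro exI[of _ b] exI[of _ a]) (auto simp: fdiff_def sym)
  qed
  from this[OF h] obtain a b where ab: "fdiff xs ys = fdiff a b" "R a b" by blast
  have "mset (xs@b) = mset (ys@a)"
  proof (rule multiset_eqI)
    fix q
    from fun_cong[OF ab(1), of q] show "count (mset (xs@b)) q = count (mset (ys@a)) q"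
      by (simp add: count_mset fdiff_def)
  qed
  then show ?thesis using cancel ms ab(2) by blast
qed

lemma fdiff3: "fdiff [x] [y,z] = (\<lambda>q. delta x q - delta y q - delta z q)"
  by (auto simp: fdiff_def delta_def fun_eq_iff)
lemma fdiff2: "fdiff [x] [y] = (\<lambda>q. delta x q - delta y q)"
  by (auto simp: fdiff_def delta_def fun_eq_iff)

lemma sum_list_mset_eq: "mset xs = mset ys \<Longrightarrow> sum_list (map \<phi> xs) = (sum_list (map \<phi> ys) :: 'g::comm_monoid_add)"
  by (metis mset_map sum_mset_sum_list)

lemma teq_univ:
  fixes \<phi> :: "'m::ab_group_add \<times> 'n::ab_group_add \<Rightarrow> 'g::ab_group_add"
  assumes a1: "\<And>m m' n. \<phi> (m+m', n) = \<phi> (m,n) + \<phi> (m',n)"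
    and a2: "\<And>m n n'. \<phi> (m, n+n') = \<phi> (m,n) + \<phi> (m,n')"
    and a3: "\<And>m a n. \<phi> (r m a, n) = \<phi> (m, l a n)"
    and h: "teq r l xs ys"
  shows "sum_list (map \<phi> xs) = sum_list (map \<phi> ys)"
proof (rule zspan_rel[where R = "\<lambda>xs ys. sum_list (map \<phi> xs) = sum_list (map \<phi> ys)" and G = "tens_gens r l"])
  show "fdiff xs ys \<in> zspan (tens_gens r l)" using h by (simp add: teq_def)
  fix g assume "g \<in> tens_gens r l"
  then show "\<exists>a b. g = fdiff a b \<and> sum_list (map \<phi> a) = sum_list (map \<phi> b)"
    unfolding tens_gens_def
  proof (elim UnE CollectE exE conjE)
    fix m m' n assume "g = (\<lambda>q. delta (m + m', n) q - delta (m, n) q - delta (m', n) q)"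
    then show ?thesis by (intro exI[of _ "[(m+m',n)]"] exI[of _ "[(m,n),(m',n)]"]) (simp add: fdiff3 a1)
  next
    fix m n n' assume "g = (\<lambda>q. delta (m, n + n') q - delta (m, n) q - delta (m, n') q)"
    then show ?thesis by (intro exI[of _ "[(m,n+n')]"] exI[of _ "[(m,n),(m,n')]"]) (simp add: fdiff3 a2)
  next
    fix m a n assume "g = (\<lambda>q. delta (r m a, n) q - delta (m, l a n) q)"
    then show ?thesis by (intro exI[of _ "[(r m a,n)]"] exI[of _ "[(m, l a n)]"]) (simp add: fdiff2 a3)
  qed
next
  fix xs ys :: "('m \<times> 'n) list" assume "mset xs = mset ys"
  then show "sum_list (map \<phi> xs) = sum_list (map \<phi> ys)" by (rule sum_list_mset_eq)
next
  fix xs ys a b :: "('m \<times> 'n) list"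
  assume "sum_list (map \<phi> (xs @ b)) = sum_list (map \<phi> (ys @ a))" "sum_list (map \<phi> a) = sum_list (map \<phi> b)"
  then show "sum_list (map \<phi> xs) = sum_list (map \<phi> ys)" by (simp add: algebra_simps)
next
  fix a b c d :: "('m \<times> 'n) list"
  assume "sum_list (map \<phi> a) = sum_list (map \<phi> b)" "sum_list (map \<phi> c) = sum_list (map \<phi> d)"
  then show "sum_list (map \<phi> (a @ c)) = sum_list (map \<phi> (b @ d))" by simp
next
  fix a b :: "('m \<times> 'n) list"
  assume "sum_list (map \<phi> a) = sum_list (map \<phi> b)"
  then show "sum_list (map \<phi> b) = sum_list (map \<phi> a)" by simp
qed

lemma concat_map_mset: "mset xs = mset ys \<Longrightarrow> mset (concat (map F xs)) = mset (concat (map F ys))"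
  by (simp add: mset_concat sum_mset_sum_list[symmetric] flip: mset_map) (metis mset_map)

lemma teq_bind:
  fixes F :: "'m::ab_group_add \<times> 'n::ab_group_add \<Rightarrow> 'p list"
  assumes a1: "\<And>m m' n. zeq G' (F (m+m', n)) (F (m,n) @ F (m',n))"
    and a2: "\<And>m n n'. zeq G' (F (m, n+n')) (F (m,n) @ F (m,n'))"
    and a3: "\<And>m a n. zeq G' (F (r m a, n)) (F (m, l a n))"
    and h: "teq r l xs ys"
  shows "zeq G' (concat (map F xs)) (concat (map F ys))"
proof (rule zspan_rel[where R = "\<lambda>xs ys. zeq G' (concat (map F xs)) (concat (map F ys))" and G = "tens_gens r l"])
  show "fdiff xs ys \<in> zspan (tens_gens r l)" using h by (simp add: teq_def)
  fix g assume "g \<in> tens_gens r l"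
  then show "\<exists>a b. g = fdiff a b \<and> zeq G' (concat (map F a)) (concat (map F b))"
    unfolding tens_gens_def
  proof (elim UnE CollectE exE conjE)
    fix m m' n assume "g = (\<lambda>q. delta (m + m', n) q - delta (m, n) q - delta (m', n) q)"
    then show ?thesis by (intro exI[of _ "[(m+m',n)]"] exI[of _ "[(m,n),(m',n)]"]) (simp add: fdiff3 a1)
  next
    fix m n n' assume "g = (\<lambda>q. delta (m, n + n') q - delta (m, n) q - delta (m, n') q)"
    then show ?thesis by (intro exI[of _ "[(m,n+n')]"] exI[of _ "[(m,n),(m,n')]"]) (simp add: fdiff3 a2)
  next
    fix m a n assume "g = (\<lambda>q. delta (r m a, n) q - delta (m, l a n) q)"
    then show ?thesis by (intro exI[of _ "[(r m a,n)]"] exI[of _ "[(m, l a n)]"]) (simp add: fdiff2 a3)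
  qed
next
  fix xs ys :: "('m \<times> 'n) list" assume "mset xs = mset ys"
  then show "zeq G' (concat (map F xs)) (concat (map F ys))" by (intro zeq_mset concat_map_mset)
next
  fix xs ys a b :: "('m \<times> 'n) list"
  assume "zeq G' (concat (map F (xs @ b))) (concat (map F (ys @ a)))" "zeq G' (concat (map F a)) (concat (map F b))"
  then show "zeq G' (concat (map F xs)) (concat (map F ys))" by (simp add: zeq_cancel)
next
  fix a b c d :: "('m \<times> 'n) list"
  assume "zeq G' (concat (map F a)) (concat (map F b))" "zeq G' (concat (map F c)) (concat (map F d))"
  then show "zeq G' (concat (map F (a @ c))) (concat (map F (b @ d)))" by (simp add: zeq_append)
next
  fix a b :: "('m \<times> 'n) list"
  assume "zeq G' (concat (map F a)) (concat (map F b))"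
  then show "zeq G' (concat (map F b)) (concat (map F a))" by (rule zeq_sym)
qed

lemma teq3_univ:
  fixes \<phi> :: "'m::ab_group_add \<times> 'n::ab_group_add \<times> 'p::ab_group_add \<Rightarrow> 'g::ab_group_add"
  assumes a1: "\<And>m m' n p. \<phi> (m+m', n, p) = \<phi> (m,n,p) + \<phi> (m',n,p)"
    and a2: "\<And>m n n' p. \<phi> (m, n+n', p) = \<phi> (m,n,p) + \<phi> (m,n',p)"
    and a3: "\<And>m n p p'. \<phi> (m, n, p+p') = \<phi> (m,n,p) + \<phi> (m,n,p')"
    and a4: "\<And>m a n p. \<phi> (r1 m a, n, p) = \<phi> (m, l1 a n, p)"
    and a5: "\<And>m a n p. \<phi> (m, r2 n a, p) = \<phi> (m, n, l2 a p)"
    and h: "teq3 r1 l1 r2 l2 xs ys"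
  shows "sum_list (map \<phi> xs) = sum_list (map \<phi> ys)"
proof (rule zspan_rel[where R = "\<lambda>xs ys. sum_list (map \<phi> xs) = sum_list (map \<phi> ys)" and G = "tens3_gens r1 l1 r2 l2"])
  show "fdiff xs ys \<in> zspan (tens3_gens r1 l1 r2 l2)" using h by (simp add: teq3_def)
  fix g assume "g \<in> tens3_gens r1 l1 r2 l2"
  then show "\<exists>a b. g = fdiff a b \<and> sum_list (map \<phi> a) = sum_list (map \<phi> b)"
    unfolding tens3_gens_def
  proof (elim UnE CollectE exE conjE)
    fix m m' n p assume "g = (\<lambda>q. delta (m + m', n, p) q - delta (m, n, p) q - delta (m', n, p) q)"
    then show ?thesis by (intro exI[of _ "[(m+m',n,p)]"] exI[of _ "[(m,n,p),(m',n,p)]"]) (simp add: fdiff3 a1)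
  next
    fix m n n' p assume "g = (\<lambda>q. delta (m, n + n', p) q - delta (m, n, p) q - delta (m, n', p) q)"
    then show ?thesis by (intro exI[of _ "[(m,n+n',p)]"] exI[of _ "[(m,n,p),(m,n',p)]"]) (simp add: fdiff3 a2)
  next
    fix m n p p' assume "g = (\<lambda>q. delta (m, n, p + p') q - delta (m, n, p) q - delta (m, n, p') q)"
    then show ?thesis by (intro exI[of _ "[(m,n,p+p')]"] exI[of _ "[(m,n,p),(m,n,p')]"]) (simp add: fdiff3 a3)
  next
    fix m a n p assume "g = (\<lambda>q. delta (r1 m a, n, p) q - delta (m, l1 a n, p) q)"
    then show ?thesis by (intro exI[of _ "[(r1 m a,n,p)]"] exI[of _ "[(m, l1 a n,p)]"]) (simp add: fdiff2 a4)
  next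
    fix m a n p assume "g = (\<lambda>q. delta (m, r2 n a, p) q - delta (m, n, l2 a p) q)"
    then show ?thesis by (intro exI[of _ "[(m,r2 n a,p)]"] exI[of _ "[(m, n, l2 a p)]"]) (simp add: fdiff2 a5)
  qed
next
  fix xs ys :: "('m \<times> 'n \<times> 'p) list" assume "mset xs = mset ys"
  then show "sum_list (map \<phi> xs) = sum_list (map \<phi> ys)" by (rule sum_list_mset_eq)
next
  fix xs ys a b :: "('m \<times> 'n \<times> 'p) list"
  assume "sum_list (map \<phi> (xs @ b)) = sum_list (map \<phi> (ys @ a))" "sum_list (map \<phi> a) = sum_list (map \<phi> b)"
  then show "sum_list (map \<phi> xs) = sum_list (map \<phi> ys)" by (simp add: algebra_simps)
next
  fix a b c d :: "('m \<times> 'n \<times> 'p) list"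
  assume "sum_list (map \<phi> a) = sum_list (map \<phi> b)" "sum_list (map \<phi> c) = sum_list (map \<phi> d)"
  then show "sum_list (map \<phi> (a @ c)) = sum_list (map \<phi> (b @ d))" by simp
next
  fix a b :: "('m \<times> 'n \<times> 'p) list"
  assume "sum_list (map \<phi> a) = sum_list (map \<phi> b)"
  then show "sum_list (map \<phi> b) = sum_list (map \<phi> a)" by simp
qed


lemma teq3_bind:
  fixes F :: "'m::ab_group_add \<times> 'n::ab_group_add \<times> 'p::ab_group_add \<Rightarrow> 'q list"
  assumes a1: "\<And>m m' n p. zeq G' (F (m+m', n, p)) (F (m,n,p) @ F (m',n,p))"
    and a2: "\<And>m n n' p. zeq G' (F (m, n+n', p)) (F (m,n,p) @ F (m,n',p))"
    and a3: "\<And>m n p p'. zeq G' (F (m, n, p+p')) (F (m,n,p) @ F (m,n,p'))"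
    and a4: "\<And>m a n p. zeq G' (F (r1 m a, n, p)) (F (m, l1 a n, p))"
    and a5: "\<And>m a n p. zeq G' (F (m, r2 n a, p)) (F (m, n, l2 a p))"
    and h: "teq3 r1 l1 r2 l2 xs ys"
  shows "zeq G' (concat (map F xs)) (concat (map F ys))"
proof (rule zspan_rel[where R = "\<lambda>xs ys. zeq G' (concat (map F xs)) (concat (map F ys))" and G = "tens3_gens r1 l1 r2 l2"])
  show "fdiff xs ys \<in> zspan (tens3_gens r1 l1 r2 l2)" using h by (simp add: teq3_def)
  fix g assume "g \<in> tens3_gens r1 l1 r2 l2"
  then show "\<exists>a b. g = fdiff a b \<and> zeq G' (concat (map F a)) (concat (map F b))"
    unfolding tens3_gens_def
  proof (elim UnE CollectE exE conjE)
    fix m m' n p assume "g = (\<lambda>q. delta (m + m', n, p) q - delta (m, n, p) q - delta (m', n, p) q)"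
    then show ?thesis by (intro exI[of _ "[(m+m',n,p)]"] exI[of _ "[(m,n,p),(m',n,p)]"]) (simp add: fdiff3 a1)
  next
    fix m n n' p assume "g = (\<lambda>q. delta (m, n + n', p) q - delta (m, n, p) q - delta (m, n', p) q)"
    then show ?thesis by (intro exI[of _ "[(m,n+n',p)]"] exI[of _ "[(m,n,p),(m,n',p)]"]) (simp add: fdiff3 a2)
  next
    fix m n p p' assume "g = (\<lambda>q. delta (m, n, p + p') q - delta (m, n, p) q - delta (m, n, p') q)"
    then show ?thesis by (intro exI[of _ "[(m,n,p+p')]"] exI[of _ "[(m,n,p),(m,n,p')]"]) (simp add: fdiff3 a3)
  next
    fix m a n p assume "g = (\<lambda>q. delta (r1 m a, n, p) q - delta (m, l1 a n, p) q)"
    then show ?thesis by (intro exI[of _ "[(r1 m a,n,p)]"] exI[of _ "[(m, l1 a n,p)]"]) (simp add: fdiff2 a4)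
  next
    fix m a n p assume "g = (\<lambda>q. delta (m, r2 n a, p) q - delta (m, n, l2 a p) q)"
    then show ?thesis by (intro exI[of _ "[(m,r2 n a,p)]"] exI[of _ "[(m, n, l2 a p)]"]) (simp add: fdiff2 a5)
  qed
next
  fix xs ys :: "('m \<times> 'n \<times> 'p) list" assume "mset xs = mset ys"
  then show "zeq G' (concat (map F xs)) (concat (map F ys))" by (intro zeq_mset concat_map_mset)
next
  fix xs ys a b :: "('m \<times> 'n \<times> 'p) list"
  assume "zeq G' (concat (map F (xs @ b))) (concat (map F (ys @ a)))" "zeq G' (concat (map F a)) (concat (map F b))"
  then show "zeq G' (concat (map F xs)) (concat (map F ys))" by (simp add: zeq_cancel)
next
  fix a b c d :: "('m \<times> 'n \<times> 'p) list"
  assume "zeq G' (concat (map F a)) (concat (map F b))" "zeq G' (concat (map F c)) (concat (map F d))"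
  then show "zeq G' (concat (map F (a @ c))) (concat (map F (b @ d)))" by (simp add: zeq_append)
next
  fix a b :: "('m \<times> 'n \<times> 'p) list"
  assume "zeq G' (concat (map F a)) (concat (map F b))"
  then show "zeq G' (concat (map F b)) (concat (map F a))" by (rule zeq_sym)
qed


lemma teq_zeq: "teq r l = zeq (tens_gens r l)" by (auto simp: fun_eq_iff teq_def zeq_def)

lemma teq_refl[simp,intro]: "teq r l xs xs" by (simp add: teq_zeq)
lemma teq_sym: "teq r l xs ys \<Longrightarrow> teq r l ys xs" by (simp add: teq_zeq zeq_sym)
lemma teq_trans: "teq r l xs ys \<Longrightarrow> teq r l ys zs \<Longrightarrow> teq r l xs zs" unfolding teq_zeq by (rule zeq_trans)
lemma teq_append: "teq r l a b \<Longrightarrow> teq r l c d \<Longrightarrow> teq r l (a@c) (b@d)" unfolding teq_zeq by (rule zeq_append)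
lemma teq_mset: "mset xs = mset ys \<Longrightarrow> teq r l xs ys" unfolding teq_zeq by (rule zeq_mset)
lemma teq_cancel: "teq r l (xs@b) (ys@a) \<Longrightarrow> teq r l a b \<Longrightarrow> teq r l xs ys" unfolding teq_zeq by (rule zeq_cancel)
lemma teq_concat: "(\<And>x. x \<in> set xs \<Longrightarrow> teq r l (F x) (H x)) \<Longrightarrow> teq r l (concat (map F xs)) (concat (map H xs))"
  unfolding teq_zeq by (rule zeq_concat)

lemma teq_addL: "teq r l [(m+m',n)] [(m,n),(m',n)]"
  unfolding teq_def tens_gens_def fdiff3 by (rule zspan_gen, rule UnI1, rule UnI1) blast
lemma teq_addR: "teq r l [(m,n+n')] [(m,n),(m,n')]"
  unfolding teq_def tens_gens_def fdiff3 by (rule zspan_gen, rule UnI1, rule UnI2) blast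
lemma teq_bal: "teq r l [(r m a,n)] [(m,l a n)]"
  unfolding teq_def tens_gens_def fdiff2 by (rule zspan_gen, rule UnI2) blast
lemma teq_zeroL: "teq r l [(0,n)] []"
  using teq_cancel[of r l "[(0,n)]" "[(0,n)]" "[]" "[(0,n)]"] teq_addL[of r l 0 0 n] by (simp add: teq_sym)
lemma teq_zeroR: "teq r l [(m,0)] []"
  using teq_cancel[of r l "[(m,0)]" "[(m,0)]" "[]" "[(m,0)]"] teq_addR[of r l m 0 0] by (simp add: teq_sym)
lemma teq_sumL: "teq r l [(sum_list ms, n)] (map (\<lambda>m. (m,n)) ms)"
proof (induct ms)
  case Nil then show ?case by (simp add: teq_zeroL)
next
  case (Cons m ms)
  have "teq r l [(m + sum_list ms, n)] [(m,n),(sum_list ms,n)]" by (rule teq_addL)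
  moreover have "teq r l ([(m,n)]@[(sum_list ms,n)]) ([(m,n)] @ map (\<lambda>m. (m,n)) ms)"
    by (rule teq_append) (use Cons in auto)
  ultimately show ?case by (auto intro: teq_trans)
qed
lemma teq_sumR: "teq r l [(m, sum_list ns)] (map (\<lambda>n. (m,n)) ns)"
proof (induct ns)
  case Nil then show ?case by (simp add: teq_zeroR)
next
  case (Cons n ns)
  have "teq r l [(m, n + sum_list ns)] [(m,n),(m,sum_list ns)]" by (rule teq_addR)
  moreover have "teq r l ([(m,n)]@[(m,sum_list ns)]) ([(m,n)] @ map (\<lambda>n. (m,n)) ns)"
    by (rule teq_append) (use Cons in auto)
  ultimately show ?case by (auto intro: teq_trans)
qed

lemma teq_bind':
  fixes F :: "'m::ab_group_add \<times> 'n::ab_group_add \<Rightarrow> ('x::ab_group_add \<times> 'y::ab_group_add) list"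
  assumes a1: "\<And>m m' n. teq r' l' (F (m+m', n)) (F (m,n) @ F (m',n))"
    and a2: "\<And>m n n'. teq r' l' (F (m, n+n')) (F (m,n) @ F (m,n'))"
    and a3: "\<And>m a n. teq r' l' (F (r m a, n)) (F (m, l a n))"
    and h: "teq r l xs ys"
  shows "teq r' l' (concat (map F xs)) (concat (map F ys))"
  using assms unfolding teq_zeq[of r' l'] by (rule teq_bind)

lemma teq_map:
  fixes f :: "'m::ab_group_add \<times> 'n::ab_group_add \<Rightarrow> ('x::ab_group_add \<times> 'y::ab_group_add)"
  assumes a1: "\<And>m m' n. teq r' l' [f (m+m', n)] [f (m,n), f (m',n)]"
    and a2: "\<And>m n n'. teq r' l' [f (m, n+n')] [f (m,n), f (m,n')]"
    and a3: "\<And>m a n. teq r' l' [f (r m a, n)] [f (m, l a n)]"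
    and h: "teq r l xs ys"
  shows "teq r' l' (map f xs) (map f ys)"
  using teq_bind'[of r' l' "\<lambda>q. [f q]" r l xs ys] assms by (simp add: map_concat)

lemma teq3_zeq: "teq3 r1 l1 r2 l2 = zeq (tens3_gens r1 l1 r2 l2)" by (auto simp: fun_eq_iff teq3_def zeq_def)




lemma teqA_mapg:
  fixes f :: "'u::ring \<Rightarrow> 'x::ring" and g :: "'w::ring \<Rightarrow> 'y::ring"
  assumes fa: "\<And>x y. f (x+y) = f x + f y" and ga: "\<And>x y. g (x+y) = g x + g y"
    and bal: "\<And>a m n. teqA t' s'' [(f (t a * m), g n)] [(f m, g (s' a * n))]"
    and h: "teqA t s' xs ys"
  shows "teqA t' s'' (map (\<lambda>(x,y). (f x, g y)) xs) (map (\<lambda>(x,y). (f x, g y)) ys)"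
  using h bal unfolding teqA_def
  by (intro teq_map) (auto simp: fa ga teq_addL teq_addR)

lemma teqA_bind:
  fixes F :: "'u::ring \<times> 'w::ring \<Rightarrow> ('x::ring \<times> 'y::ring) list"
  assumes a1: "\<And>m m' n. teqA t' s'' (F (m+m', n)) (F (m,n) @ F (m',n))"
    and a2: "\<And>m n n'. teqA t' s'' (F (m, n+n')) (F (m,n) @ F (m,n'))"
    and a3: "\<And>a m n. teqA t' s'' (F (t a * m, n)) (F (m, s' a * n))"
    and h: "teqA t s' xs ys"
  shows "teqA t' s'' (concat (map F xs)) (concat (map F ys))"
  using assms unfolding teqA_def by (intro teq_bind') auto

lemma teqA_bal: "teqA t s' [(t a * m, n)] [(m, s' a * n)]"
  unfolding teqA_def by (rule teq_bal[where r="\<lambda>u a. t a * u" and l="\<lambda>a w. s' a * w", simplified])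
lemma teqA_addL: "teqA t s' [(m+m', n)] [(m, n), (m', n)]" unfolding teqA_def by (rule teq_addL)
lemma teqA_addR: "teqA t s' [(m, n+n')] [(m, n), (m, n')]" unfolding teqA_def by (rule teq_addR)
lemma teqA_refl[simp]: "teqA t s' xs xs" unfolding teqA_def by simp
lemma teqA_sym: "teqA t s' xs ys \<Longrightarrow> teqA t s' ys xs" unfolding teqA_def by (rule teq_sym)
lemma teqA_trans: "teqA t s' xs ys \<Longrightarrow> teqA t s' ys zs \<Longrightarrow> teqA t s' xs zs" unfolding teqA_def by (rule teq_trans)
lemma teqA_append: "teqA t s' a b \<Longrightarrow> teqA t s' c d \<Longrightarrow> teqA t s' (a@c) (b@d)" unfolding teqA_def by (rule teq_append)
lemma teqA_mset: "mset xs = mset ys \<Longrightarrow> teqA t s' xs ys" unfolding teqA_def by (rule teq_mset)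
lemma teqA_cancel: "teqA t s' (xs@b) (ys@a) \<Longrightarrow> teqA t s' a b \<Longrightarrow> teqA t s' xs ys" unfolding teqA_def by (rule teq_cancel)
lemma teqA_concat: "(\<And>x. x \<in> set xs \<Longrightarrow> teqA t s' (F x) (H x)) \<Longrightarrow> teqA t s' (concat (map F xs)) (concat (map H xs))"
  unfolding teqA_def by (rule teq_concat)
lemma teqA_sumL: "teqA t s' [(sum_list ms, n)] (map (\<lambda>m. (m,n)) ms)" unfolding teqA_def by (rule teq_sumL)
lemma teqA_sumR: "teqA t s' [(m, sum_list ns)] (map (\<lambda>n. (m,n)) ns)" unfolding teqA_def by (rule teq_sumR)

lemma teqA_rm1: "teqA t s' xs ys \<Longrightarrow> teqA t s' (map (\<lambda>(x,y). (x * c, y)) xs) (map (\<lambda>(x,y). (x * c, y)) ys)"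
  using teqA_mapg[of "\<lambda>x. x * c" "\<lambda>y. y" t s' t s' xs ys]
  by (simp add: distrib_right mult.assoc teqA_bal)

lemma teqA_rm2: "teqA t s' xs ys \<Longrightarrow> teqA t s' (map (\<lambda>(x,y). (x, y * c)) xs) (map (\<lambda>(x,y). (x, y * c)) ys)"
  using teqA_mapg[of "\<lambda>x. x" "\<lambda>y. y * c" t s' t s' xs ys]
  by (simp add: distrib_right mult.assoc teqA_bal)

lemma teqA_lm1:
  assumes c: "\<And>a. c * t a = t a * c" and h: "teqA t s' xs ys"
  shows "teqA t s' (map (\<lambda>(x,y). (c * x, y)) xs) (map (\<lambda>(x,y). (c * x, y)) ys)"
proof -
  have e: "c * (t a * m) = t a * (c * m)" for a m by (simp add: mult.assoc[symmetric] c)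
  show ?thesis using teqA_mapg[of "\<lambda>x. c * x" "\<lambda>y. y" t s' t s' xs ys] h
    by (simp add: distrib_left e teqA_bal)
qed

lemma teqA_lm2:
  assumes c: "\<And>a. c * s' a = s' a * c" and h: "teqA t s' xs ys"
  shows "teqA t s' (map (\<lambda>(x,y). (x, c * y)) xs) (map (\<lambda>(x,y). (x, c * y)) ys)"
proof -
  have e: "c * (s' a * m) = s' a * (c * m)" for a m by (simp add: mult.assoc[symmetric] c)
  show ?thesis using teqA_mapg[of "\<lambda>x. x" "\<lambda>y. c * y" t s' t s' xs ys] h
    by (simp add: distrib_left e teqA_bal)
qed

lemma mset_swap: "mset (concat (map (\<lambda>x. map (f x) ys) xs)) = mset (concat (map (\<lambda>y. map (\<lambda>x. f x y) xs) ys))"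
proof (induct xs)
  case Nil then show ?case by (induct ys) auto
next
  case (Cons x xs)
  have "mset (concat (map (\<lambda>y. map (\<lambda>x. f x y) (x#xs)) ys)) = mset (map (f x) ys) + mset (concat (map (\<lambda>y. map (\<lambda>x. f x y) xs) ys))"
    by (induct ys) auto
  then show ?case using Cons by simp
qed

locale LHK =
  fixes \<iota> :: "'k::{comm_ring,monoid_mult} \<Rightarrow> 'a::{ring,monoid_mult}"
    and s t :: "'a \<Rightarrow> 'u::{ring,monoid_mult}" and D :: "'u \<Rightarrow> ('u \<times> 'u) list" and e :: "'u \<Rightarrow> 'a"
    and sV tV :: "'a \<Rightarrow> 'v::{ring,monoid_mult}" and DV :: "'v \<Rightarrow> ('v \<times> 'v) list" and eV :: "'v \<Rightarrow> 'a"
    and \<pi> :: "'u \<Rightarrow> 'v"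
  assumes HU: "left_hopf_algebroid \<iota> s t D e"
    and HV: "left_hopf_algebroid \<iota> sV tV DV eV"
    and mor: "bialgebroid_morphism s t D e sV tV DV eV \<pi>"
    and surj: "surj \<pi>"
begin

lemma bial: "left_bialgebroid \<iota> s t D e" using HU by (simp add: left_hopf_algebroid_def)
lemma bialV: "left_bialgebroid \<iota> sV tV DV eV" using HV by (simp add: left_hopf_algebroid_def)

lemma s_add: "s (x+y) = s x + s y" using bial by (simp add: left_bialgebroid_def)
lemma s_mult: "s (x*y) = s x * s y" using bial by (simp add: left_bialgebroid_def)
lemma s_one[simp]: "s 1 = 1" using bial by (simp add: left_bialgebroid_def)
lemma t_add: "t (x+y) = t x + t y" using bial by (simp add: left_bialgebroid_def)
lemma t_mult: "t (x*y) = t y * t x" using bial by (simp add: left_bialgebroid_def)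
lemma t_one[simp]: "t 1 = 1" using bial by (simp add: left_bialgebroid_def)
lemma st: "s x * t y = t y * s x" using bial by (simp add: left_bialgebroid_def)
lemma central: "s (\<iota> c) * u = u * s (\<iota> c)" using bial by (simp add: left_bialgebroid_def)
lemma Dadd: "teqA t s (D (u+v)) (D u @ D v)" using bial by (simp add: left_bialgebroid_def)
lemma Dtak: "teqA t s (map (\<lambda>(x, y). (x * t a, y)) (D u)) (map (\<lambda>(x, y). (x, y * s a)) (D u))"
  using bial by (simp add: left_bialgebroid_def)
lemma Dcoass: "teqA3 s t (concat (map (\<lambda>(x1, x2). map (\<lambda>(y1, y2). (y1, y2, x2)) (D x1)) (D u)))
         (concat (map (\<lambda>(x1, x2). map (\<lambda>(y1, y2). (x1, y1, y2)) (D x2)) (D u)))"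
  using bial by (simp add: left_bialgebroid_def)
lemma Done: "teqA t s (D 1) [(1, 1)]" using bial by (simp add: left_bialgebroid_def)
lemma Dmult: "teqA t s (D (u * v)) (concat (map (\<lambda>(x1, x2). map (\<lambda>(y1, y2). (x1 * y1, x2 * y2)) (D v)) (D u)))"
  using bial by (simp add: left_bialgebroid_def)
lemma Dlin: "teqA t s (D (t c * s b * u * s d * t a)) (map (\<lambda>(x, y). (s b * x * s d, t c * y * t a)) (D u))"
  using bial unfolding left_bialgebroid_def by blast
lemma e_add: "e (u+v) = e u + e v" using bial by (simp add: left_bialgebroid_def)
lemma e_lin: "e (t c * s b * u) = b * e u * c" using bial by (simp add: left_bialgebroid_def)
lemma counit1: "sum_list (map (\<lambda>(x, y). s (e x) * y) (D u)) = u" using bial by (simp add: left_bialgebroid_def)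
lemma counit2: "sum_list (map (\<lambda>(x, y). t (e y) * x) (D u)) = u" using bial by (simp add: left_bialgebroid_def)
lemma Hinj: "teqA t s (galois_map D xs) (galois_map D ys) \<Longrightarrow> teqAop t xs ys"
  using HU by (simp add: left_hopf_algebroid_def)
lemma Hsurj: "\<exists>xs. teqA t s (galois_map D xs) zs"
  using HU by (simp add: left_hopf_algebroid_def)

lemma eV_add: "eV (u+v) = eV u + eV v" using bialV by (simp add: left_bialgebroid_def)
lemma eV_s: "eV (sV b * u) = b * eV u"
  using bialV unfolding left_bialgebroid_def by (metis mult_1 mult_1_right)

lemma pi_add: "\<pi> (x+y) = \<pi> x + \<pi> y" using mor by (simp add: bialgebroid_morphism_def)
lemma pi_mult: "\<pi> (x*y) = \<pi> x * \<pi> y" using mor by (simp add: bialgebroid_morphism_def)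
lemma pi_one[simp]: "\<pi> 1 = 1" using mor by (simp add: bialgebroid_morphism_def)
lemma pi_s: "\<pi> (s a) = sV a" using mor by (simp add: bialgebroid_morphism_def)
lemma pi_e: "eV (\<pi> u) = e u" using mor by (simp add: bialgebroid_morphism_def)

lemma e_s: "e (s b * u) = b * e u" using e_lin[of 1 b u] by simp
lemma e_t: "e (t c * u) = e u * c" using e_lin[of c 1 u] by simp

lemma Ds: "teqA t s (D (s b * u)) (map (\<lambda>(x, y). (s b * x, y)) (D u))"
  using Dlin[of 1 b u 1 1] by simp
lemma Dt: "teqA t s (D (t c * u)) (map (\<lambda>(x, y). (x, t c * y)) (D u))"
  using Dlin[of c 1 u 1 1] by simp
lemma Dsr: "teqA t s (D (u * s d)) (map (\<lambda>(x, y). (x * s d, y)) (D u))"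
  using Dlin[of 1 1 u d 1] by simp
lemma Dtr: "teqA t s (D (u * t a)) (map (\<lambda>(x, y). (x, y * t a)) (D u))"
  using Dlin[of 1 1 u 1 a] by simp

lemma s_zero[simp]: "s 0 = 0" using s_add[of 0 0] by simp
lemma t_zero[simp]: "t 0 = 0" using t_add[of 0 0] by simp
lemma pi_zero[simp]: "\<pi> 0 = 0" using pi_add[of 0 0] by simp
lemma s_neg: "s (- x) = - s x" using s_add[of x "-x"] add.inverse_unique[of "s x" "s (-x)"] by simp

lemma pimap: "teqA t s xs ys \<Longrightarrow> teqA t sV (map (\<lambda>(x,y). (x, \<pi> y)) xs) (map (\<lambda>(x,y). (x, \<pi> y)) ys)"
  using teqA_mapg[of "\<lambda>x. x" "\<pi>" t sV t s xs ys]
  by (simp add: pi_add pi_mult pi_s teqA_bal)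

definition Bk where "Bk = left_hopf_kernel t D sV \<pi>"
lemma Bk_iff: "b \<in> Bk \<longleftrightarrow> teqA t sV (map (\<lambda>(x,y). (x, \<pi> y)) (D b)) [(b,1)]"
  by (simp add: Bk_def left_hopf_kernel_def)

definition Cm where "Cm = {b. \<forall>a. t a * b = b * t a}"

end



lemma teqA_univ:
  fixes \<phi> :: "'u::ring \<times> 'w::ring \<Rightarrow> 'g::ab_group_add"
  assumes "\<And>m m' n. \<phi> (m+m', n) = \<phi> (m,n) + \<phi> (m',n)"
    and "\<And>m n n'. \<phi> (m, n+n') = \<phi> (m,n) + \<phi> (m,n')"
    and "\<And>a m n. \<phi> (t a * m, n) = \<phi> (m, s' a * n)"
    and "teqA t s' xs ys"
  shows "sum_list (map \<phi> xs) = sum_list (map \<phi> ys)"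
  using assms unfolding teqA_def by (intro teq_univ) auto

lemma teqAop_univ:
  fixes \<phi> :: "'u::ring \<times> 'u \<Rightarrow> 'g::ab_group_add"
  assumes "\<And>m m' n. \<phi> (m+m', n) = \<phi> (m,n) + \<phi> (m',n)"
    and "\<And>m n n'. \<phi> (m, n+n') = \<phi> (m,n) + \<phi> (m,n')"
    and "\<And>a m n. \<phi> (m * t a, n) = \<phi> (m, t a * n)"
    and "teqAop t xs ys"
  shows "sum_list (map \<phi> xs) = sum_list (map \<phi> ys)"
  using assms unfolding teqAop_def by (intro teq_univ) auto

lemma teqA_rm12: "teqA t s' xs ys \<Longrightarrow> teqA t s' (map (\<lambda>(x,y). (x * c, y * d)) xs) (map (\<lambda>(x,y). (x * c, y * d)) ys)"
  using teqA_mapg[of "\<lambda>x. x * c" "\<lambda>y. y * d" t s' t s' xs ys]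
  by (simp add: distrib_right mult.assoc teqA_bal)

lemma mset_swap2: "mset (concat (map (\<lambda>(x1,x2). map (\<lambda>(y1,y2). f x1 x2 y1 y2) ys) xs))
   = mset (concat (map (\<lambda>(y1,y2). map (\<lambda>(x1,x2). f x1 x2 y1 y2) xs) ys))"
  using mset_swap[of "\<lambda>x y. f (fst x) (snd x) (fst y) (snd y)" ys xs] by (simp add: split_def)

context LHK begin

lemma t_e_one: "t (e 1) = 1"
proof -
  have "sum_list (map (\<lambda>(x, y). t (e y) * x) (D 1)) = sum_list (map (\<lambda>(x, y). t (e y) * x) [(1,1)])"
    by (rule teqA_univ[OF _ _ _ Done]) (auto simp: distrib_left distrib_right e_add t_add e_s t_mult mult.assoc)
  then show ?thesis using counit2[of 1] by simp
qed

lemma one_B: "1 \<in> Bk"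
  unfolding Bk_iff using pimap[OF Done] by simp

lemma B_comm: assumes "b \<in> Bk" shows "t a * b = b * t a"
proof -
  have h: "teqA t sV (map (\<lambda>(x,y). (x, \<pi> y)) (D b)) [(b,1)]" using assms Bk_iff by simp
  have A1: "teqA t sV (map (\<lambda>(x,y). (x * t a, \<pi> y)) (D b)) [(b * t a, 1)]"
    using teqA_rm1[OF h, of "t a"] by (simp add: map_map comp_def split_def)
  have A2: "teqA t sV (map (\<lambda>(x,y). (x * t a, \<pi> y)) (D b)) (map (\<lambda>(x,y). (x, \<pi> y * sV a)) (D b))"
    using pimap[OF Dtak[of a b]] by (simp add: map_map comp_def split_def pi_mult pi_s)
  have A3: "teqA t sV (map (\<lambda>(x,y). (x, \<pi> y * sV a)) (D b)) [(b, sV a)]"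
    using teqA_rm2[OF h, of "sV a"] by (simp add: map_map comp_def split_def)
  have A4: "teqA t sV [(b, sV a)] [(t a * b, 1)]" using teqA_bal[where t=t and a=a and m=b and s'=sV and n=1] by (simp add: teqA_sym)
  have "teqA t sV [(b * t a, 1)] [(t a * b, 1)]"
    by (meson A1 A2 A3 A4 teqA_sym teqA_trans)
  then have "sum_list (map (\<lambda>(x, y). t (eV y) * x) [(b * t a, 1)]) = sum_list (map (\<lambda>(x, y). t (eV y) * x) [(t a * b, 1)])"
    by (rule teqA_univ[rotated 3]) (auto simp: distrib_left distrib_right eV_add t_add eV_s t_mult mult.assoc)
  moreover have "t (eV 1) = 1" using pi_e[of 1] t_e_one by simp
  ultimately show ?thesis by simp
qed

lemma s_B: "s a \<in> Bk"
proof -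
  have "teqA t s (D (s a * 1)) (map (\<lambda>(x, y). (s a * x, y)) (D 1))" by (rule Ds)
  moreover have "teqA t s (map (\<lambda>(x, y). (s a * x, y)) (D 1)) (map (\<lambda>(x, y). (s a * x, y)) [(1,1)])"
    by (rule teqA_lm1[OF _ Done]) (simp add: st)
  ultimately have "teqA t s (D (s a)) [(s a, 1)]" by (auto intro: teqA_trans)
  then show ?thesis unfolding Bk_iff using pimap by fastforce
qed

lemma add_B: assumes "b \<in> Bk" "b' \<in> Bk" shows "b + b' \<in> Bk"
proof -
  have "teqA t sV (map (\<lambda>(x,y). (x, \<pi> y)) (D (b+b'))) (map (\<lambda>(x,y). (x, \<pi> y)) (D b @ D b'))"
    by (rule pimap[OF Dadd])
  moreover have "teqA t sV (map (\<lambda>(x,y). (x, \<pi> y)) (D b @ D b')) ([(b,1)] @ [(b',1)])"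
    unfolding map_append by (intro teqA_append) (use assms in \<open>auto simp: Bk_iff\<close>)
  moreover have "teqA t sV ([(b,1)] @ [(b',1)]) [(b+b',1)]" by (simp add: teqA_addL teqA_sym)
  ultimately show ?thesis unfolding Bk_iff by (meson teqA_trans)
qed

lemma neg_B: assumes "b \<in> Bk" shows "- b \<in> Bk"
proof -
  have e1: "s (-1) * b = - b" by (simp add: s_neg)
  have "teqA t s (D (s (-1) * b)) (map (\<lambda>(x, y). (s (-1) * x, y)) (D b))" by (rule Ds)
  then have "teqA t sV (map (\<lambda>(x,y). (x, \<pi> y)) (D (- b))) (map (\<lambda>(x,y). (s (-1) * x, y)) (map (\<lambda>(x,y). (x, \<pi> y)) (D b)))"
    using pimap e1 by (fastforce simp: map_map comp_def split_def)
  moreover have "teqA t sV (map (\<lambda>(x,y). (s (-1) * x, y)) (map (\<lambda>(x,y). (x, \<pi> y)) (D b))) (map (\<lambda>(x,y). (s (-1) * x, y)) [(b,1)])"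
    by (rule teqA_lm1) (use assms Bk_iff st in auto)
  ultimately show ?thesis unfolding Bk_iff using e1 by (auto intro: teqA_trans)
qed

lemma mult_B: assumes b: "b \<in> Bk" and b': "b' \<in> Bk" shows "b * b' \<in> Bk"
proof -
  let ?L1 = "concat (map (\<lambda>(x1, x2). map (\<lambda>(y1, y2). (x1 * y1, \<pi> x2 * \<pi> y2)) (D b')) (D b))"
  let ?L2 = "concat (map (\<lambda>(y1, y2). map (\<lambda>(x1, x2). (x1 * y1, \<pi> x2 * \<pi> y2)) (D b)) (D b'))"
  have "teqA t sV (map (\<lambda>(x,y). (x, \<pi> y)) (D (b*b'))) ?L1"
    using pimap[OF Dmult[of b b']] by (simp add: map_concat map_map comp_def split_def pi_mult)
  moreover have "teqA t sV ?L1 ?L2" by (rule teqA_mset, rule mset_swap2)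
  moreover have "teqA t sV ?L2 (concat (map (\<lambda>(y1, y2). [(b * y1, \<pi> y2)]) (D b')))"
  proof (rule teqA_concat)
    fix y assume "y \<in> set (D b')"
    obtain y1 y2 where y: "y = (y1, y2)" by fastforce
    have "teqA t sV (map (\<lambda>(x,y). (x * y1, y * \<pi> y2)) (map (\<lambda>(x,y). (x, \<pi> y)) (D b))) (map (\<lambda>(x,y). (x * y1, y * \<pi> y2)) [(b,1)])"
      by (rule teqA_rm12) (use b Bk_iff in auto)
    then show "teqA t sV ((\<lambda>(y1, y2). map (\<lambda>(x1, x2). (x1 * y1, \<pi> x2 * \<pi> y2)) (D b)) y) ((\<lambda>(y1, y2). [(b * y1, \<pi> y2)]) y)"
      by (simp add: y map_map comp_def split_def)
  qed
  moreover have "concat (map (\<lambda>(y1, y2). [(b * y1, \<pi> y2)]) (D b')) = map (\<lambda>(x,y). (b * x, y)) (map (\<lambda>(x,y). (x, \<pi> y)) (D b'))"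
    by (induct "D b'") (auto simp: split_def)
  moreover have "teqA t sV (map (\<lambda>(x,y). (b * x, y)) (map (\<lambda>(x,y). (x, \<pi> y)) (D b'))) (map (\<lambda>(x,y). (b * x, y)) [(b',1)])"
    by (rule teqA_lm1) (use b' Bk_iff B_comm[OF b] in auto)
  ultimately show ?thesis unfolding Bk_iff by (auto intro: teqA_trans)
qed

end



lemma galois_append: "galois_map D (xs@ys) = galois_map D xs @ galois_map D ys"
  by (simp add: galois_map_def)
lemma galois_concat: "galois_map D (concat L) = concat (map (galois_map D) L)"
  by (induct L) (auto simp: galois_append, simp add: galois_map_def)
lemma galois_rm2: "galois_map D (map (\<lambda>(x,y). (x, y * c)) xs) = map (\<lambda>(p,q). (p, q * c)) (galois_map D xs)"
  by (induct xs) (auto simp: galois_map_def mult.assoc split_def)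

lemma teqA_split_map:
  assumes "\<And>z. teqA t s' [F z] [G z, H z]"
  shows "teqA t s' (map F L) (map G L @ map H L)"
proof -
  have h1: "teqA t s' (concat (map (\<lambda>z. [F z]) L)) (concat (map (\<lambda>z. [G z, H z]) L))"
    by (rule teqA_concat) (use assms in auto)
  have h2: "mset (concat (map (\<lambda>z. [G z, H z]) L)) = mset (map G L @ map H L)"
    by (induct L) auto
  have "concat (map (\<lambda>z. [F z]) L) = map F L" by (induct L) auto
  then show ?thesis using teqA_trans[OF h1 teqA_mset[OF h2]] by simp
qed

context LHK begin

definition tr where "tr u xs \<longleftrightarrow> teqA t s (galois_map D xs) [(u,1)]"
abbreviation A where "A u b \<equiv> hact s t D u b"
definition ev :: "('u \<times> 'u) list \<Rightarrow> 'u \<Rightarrow> 'u" where "ev xs b = sum_list (map (\<lambda>(x,y). x * b * y) xs)"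

lemma tr_transl: "tr u (translation s t D u)"
  unfolding tr_def translation_def by (rule someI_ex) (rule Hsurj)

lemma A_def': "A u b = ev (translation s t D u) b"
  by (simp add: hact_def ev_def)

lemma Cm_one: "1 \<in> Cm" by (simp add: Cm_def)
lemma Cm_s: "s a \<in> Cm" by (simp add: Cm_def st)
lemma Cm_add: "b \<in> Cm \<Longrightarrow> b' \<in> Cm \<Longrightarrow> b + b' \<in> Cm" by (simp add: Cm_def distrib_left distrib_right)
lemma Cm_mult: "b \<in> Cm \<Longrightarrow> b' \<in> Cm \<Longrightarrow> b * b' \<in> Cm"
  by (simp add: Cm_def) (metis mult.assoc)
lemma B_Cm: "b \<in> Bk \<Longrightarrow> b \<in> Cm" by (simp add: Cm_def B_comm)

lemma welldef:
  assumes b: "b \<in> Cm" and "tr u xs" "tr u ys"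
  shows "ev xs b = ev ys b"
proof -
  have "teqA t s (galois_map D xs) (galois_map D ys)" using assms by (auto simp: tr_def intro: teqA_trans teqA_sym)
  then have "teqAop t xs ys" by (rule Hinj)
  then show ?thesis unfolding ev_def
    by (rule teqAop_univ[rotated 3]) (use b in \<open>auto simp: distrib_left distrib_right Cm_def mult.assoc\<close>)
qed

lemma act_eq: "b \<in> Cm \<Longrightarrow> tr u xs \<Longrightarrow> A u b = ev xs b"
  using welldef tr_transl A_def' by metis

lemma tr_add: "tr u xs \<Longrightarrow> tr v ys \<Longrightarrow> tr (u+v) (xs@ys)"
  unfolding tr_def galois_append
proof -
  assume "teqA t s (galois_map D xs) [(u, 1)]" "teqA t s (galois_map D ys) [(v, 1)]"
  then have "teqA t s (galois_map D xs @ galois_map D ys) ([(u, 1)] @ [(v, 1)])" by (rule teqA_append)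
  moreover have "teqA t s ([(u, 1)] @ [(v, 1)]) [(u+v,1)]" using teqA_addL teqA_sym by fastforce
  ultimately show "teqA t s (galois_map D xs @ galois_map D ys) [(u + v, 1)]" by (rule teqA_trans)
qed

lemma tr_one: "tr 1 [(1,1)]"
  unfolding tr_def using Done by (simp add: galois_map_def split_def)

lemma tr_tl: "tr u xs \<Longrightarrow> tr (t a * u) (map (\<lambda>(x,y). (x, y * s a)) xs)"
  unfolding tr_def galois_rm2
proof -
  assume "teqA t s (galois_map D xs) [(u, 1)]"
  from teqA_rm2[OF this, of "s a"]
  have "teqA t s (map (\<lambda>(p, q). (p, q * s a)) (galois_map D xs)) [(u, s a)]" by simp
  moreover have "teqA t s [(u, s a)] [(t a * u, 1)]"
    using teqA_bal[where t=t and a=a and m=u and s'=s and n=1] by (simp add: teqA_sym)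
  ultimately show "teqA t s (map (\<lambda>(p, q). (p, q * s a)) (galois_map D xs)) [(t a * u, 1)]"
    by (rule teqA_trans)
qed

lemma tr_sl: assumes "tr u xs" shows "tr (s a * u) (map (\<lambda>(x,y). (s a * x, y)) xs)"
proof -
  have "teqA t s (galois_map D (map (\<lambda>(x,y). (s a * x, y)) xs)) (map (\<lambda>(p,q). (s a * p, q)) (galois_map D xs))"
    unfolding galois_map_def map_concat map_map
  proof (rule teqA_concat)
    fix z assume "z \<in> set xs"
    obtain x y where z: "z = (x,y)" by fastforce
    have "teqA t s (map (\<lambda>(x1,x2). (x1, x2 * y)) (D (s a * x))) (map (\<lambda>(x1,x2). (x1, x2 * y)) (map (\<lambda>(x, y). (s a * x, y)) (D x)))"
      by (rule teqA_rm2[OF Ds])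
    then show "teqA t s (((\<lambda>(u, v). map (\<lambda>(x1, x2). (x1, x2 * v)) (D u)) \<circ> (\<lambda>(x, y). (s a * x, y))) z)
          ((map (\<lambda>(p, q). (s a * p, q)) \<circ> (\<lambda>(u, v). map (\<lambda>(x1, x2). (x1, x2 * v)) (D u))) z)"
      by (simp add: z map_map comp_def split_def)
  qed
  moreover have "teqA t s (map (\<lambda>(p,q). (s a * p, q)) (galois_map D xs)) (map (\<lambda>(p,q). (s a * p, q)) [(u,1)])"
    by (rule teqA_lm1) (use assms st in \<open>auto simp: tr_def\<close>)
  ultimately show ?thesis unfolding tr_def by (auto intro: teqA_trans)
qed

lemma tr_sr: assumes "tr u xs" shows "tr (u * s a) (map (\<lambda>(x,y). (x * s a, y)) xs)"
proof -
  have "teqA t s (galois_map D (map (\<lambda>(x,y). (x * s a, y)) xs)) (map (\<lambda>(p,q). (p * s a, q)) (galois_map D xs))"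
    unfolding galois_map_def map_concat map_map
  proof (rule teqA_concat)
    fix z assume "z \<in> set xs"
    obtain x y where z: "z = (x,y)" by fastforce
    have "teqA t s (map (\<lambda>(x1,x2). (x1, x2 * y)) (D (x * s a))) (map (\<lambda>(x1,x2). (x1, x2 * y)) (map (\<lambda>(x, y). (x * s a, y)) (D x)))"
      by (rule teqA_rm2[OF Dsr])
    then show "teqA t s (((\<lambda>(u, v). map (\<lambda>(x1, x2). (x1, x2 * v)) (D u)) \<circ> (\<lambda>(x, y). (x * s a, y))) z)
          ((map (\<lambda>(p, q). (p * s a, q)) \<circ> (\<lambda>(u, v). map (\<lambda>(x1, x2). (x1, x2 * v)) (D u))) z)"
      by (simp add: z map_map comp_def split_def)
  qed
  moreover have "teqA t s (map (\<lambda>(p,q). (p * s a, q)) (galois_map D xs)) (map (\<lambda>(p,q). (p * s a, q)) [(u,1)])"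
    by (rule teqA_rm1) (use assms in \<open>auto simp: tr_def\<close>)
  ultimately show ?thesis unfolding tr_def by (auto intro: teqA_trans)
qed

lemma tr_tr: assumes "tr u xs" shows "tr (u * t a) (map (\<lambda>(x,y). (x, s a * y)) xs)"
proof -
  have "teqA t s (galois_map D (map (\<lambda>(x,y). (x, s a * y)) xs)) (map (\<lambda>(p,q). (p * t a, q)) (galois_map D xs))"
    unfolding galois_map_def map_concat map_map
  proof (rule teqA_concat)
    fix z assume "z \<in> set xs"
    obtain x y where z: "z = (x,y)" by fastforce
    have "teqA t s (map (\<lambda>(x1,x2). (x1, x2 * y)) (map (\<lambda>(x, y). (x, y * s a)) (D x))) (map (\<lambda>(x1,x2). (x1, x2 * y)) (map (\<lambda>(x, y). (x * t a, y)) (D x)))"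
      by (rule teqA_rm2[OF teqA_sym[OF Dtak]])
    then show "teqA t s (((\<lambda>(u, v). map (\<lambda>(x1, x2). (x1, x2 * v)) (D u)) \<circ> (\<lambda>(x, y). (x, s a * y))) z)
          ((map (\<lambda>(p, q). (p * t a, q)) \<circ> (\<lambda>(u, v). map (\<lambda>(x1, x2). (x1, x2 * v)) (D u))) z)"
      by (simp add: z map_map comp_def split_def mult.assoc)
  qed
  moreover have "teqA t s (map (\<lambda>(p,q). (p * t a, q)) (galois_map D xs)) (map (\<lambda>(p,q). (p * t a, q)) [(u,1)])"
    by (rule teqA_rm1) (use assms in \<open>auto simp: tr_def\<close>)
  ultimately show ?thesis unfolding tr_def by (auto intro: teqA_trans)
qed

lemma tr_comm: assumes "tr u xs" shows "teqAop t (map (\<lambda>(x,y). (t a * x, y)) xs) (map (\<lambda>(x,y). (x, y * t a)) xs)"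
proof (rule Hinj)
  have "teqA t s (galois_map D (map (\<lambda>(x,y). (t a * x, y)) xs)) (map (\<lambda>(p,q). (p, t a * q)) (galois_map D xs))"
    unfolding galois_map_def map_concat map_map
  proof (rule teqA_concat)
    fix z assume "z \<in> set xs"
    obtain x y where z: "z = (x,y)" by fastforce
    have "teqA t s (map (\<lambda>(x1,x2). (x1, x2 * y)) (D (t a * x))) (map (\<lambda>(x1,x2). (x1, x2 * y)) (map (\<lambda>(x, y). (x, t a * y)) (D x)))"
      by (rule teqA_rm2[OF Dt])
    then show "teqA t s (((\<lambda>(u, v). map (\<lambda>(x1, x2). (x1, x2 * v)) (D u)) \<circ> (\<lambda>(x, y). (t a * x, y))) z)
          ((map (\<lambda>(p, q). (p, t a * q)) \<circ> (\<lambda>(u, v). map (\<lambda>(x1, x2). (x1, x2 * v)) (D u))) z)"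
      by (simp add: z map_map comp_def split_def mult.assoc)
  qed
  moreover have "teqA t s (map (\<lambda>(p,q). (p, t a * q)) (galois_map D xs)) (map (\<lambda>(p,q). (p, t a * q)) [(u,1)])"
    by (rule teqA_lm2) (use assms st in \<open>auto simp: tr_def\<close>)
  moreover have "teqA t s (map (\<lambda>(p,q). (p, q * t a)) (galois_map D xs)) (map (\<lambda>(p,q). (p, q * t a)) [(u,1)])"
    by (rule teqA_rm2) (use assms in \<open>auto simp: tr_def\<close>)
  ultimately show "teqA t s (galois_map D (map (\<lambda>(x,y). (t a * x, y)) xs)) (galois_map D (map (\<lambda>(x,y). (x, y * t a)) xs))"
    unfolding galois_rm2 by (auto intro: teqA_trans teqA_sym)
qed

end



lemma galois_sum: "sum_list (map \<phi> (galois_map D xs)) = sum_list (map (\<lambda>(x,y). sum_list (map (\<lambda>(x1,x2). \<phi> (x1, x2*y)) (D x))) xs)"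
  by (induct xs) (auto simp: galois_map_def split_def comp_def)

context LHK begin

lemma claimM:
  assumes v: "tr v ys"
  shows "teqA t s (galois_map D (map (\<lambda>(x',y'). (x * x', y' * y)) ys)) (map (\<lambda>(p,q). (p * v, q * y)) (D x))"
proof -
  define K where "K = (\<lambda>(p,q). map (\<lambda>(x1,x2). (x1 * p, x2 * q * y)) (D x))"
  let ?R = "concat (map (\<lambda>(x',y'). concat (map (\<lambda>(y1,y2). map (\<lambda>(x1,x2). (x1*y1, x2*y2*(y'*y))) (D x)) (D x'))) ys)"
  have S1: "teqA t s (galois_map D (map (\<lambda>(x',y'). (x * x', y' * y)) ys)) ?R"
    unfolding galois_map_def map_map
  proof (rule teqA_concat)
    fix z assume "z \<in> set ys"
    obtain x' y' where z: "z = (x',y')" by fastforce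
    have "teqA t s (map (\<lambda>(z1,z2). (z1, z2*(y'*y))) (D (x*x')))
       (map (\<lambda>(z1,z2). (z1, z2*(y'*y))) (concat (map (\<lambda>(x1, x2). map (\<lambda>(y1, y2). (x1 * y1, x2 * y2)) (D x')) (D x))))"
      by (rule teqA_rm2[OF Dmult])
    moreover have "map (\<lambda>(z1,z2). (z1, z2*(y'*y))) (concat (map (\<lambda>(x1, x2). map (\<lambda>(y1, y2). (x1 * y1, x2 * y2)) (D x')) (D x)))
       = concat (map (\<lambda>(x1, x2). map (\<lambda>(y1, y2). (x1 * y1, x2 * y2 * (y'*y))) (D x')) (D x))"
      by (simp add: map_concat map_map comp_def split_def)
    moreover have "teqA t s (concat (map (\<lambda>(x1, x2). map (\<lambda>(y1, y2). (x1 * y1, x2 * y2 * (y'*y))) (D x')) (D x)))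
         (concat (map (\<lambda>(y1,y2). map (\<lambda>(x1,x2). (x1*y1, x2*y2*(y'*y))) (D x)) (D x')))"
      by (rule teqA_mset, rule mset_swap2)
    ultimately show "teqA t s (((\<lambda>(u, v). map (\<lambda>(x1, x2). (x1, x2 * v)) (D u)) \<circ> (\<lambda>(x', y'). (x * x', y' * y))) z)
        ((\<lambda>(x',y'). concat (map (\<lambda>(y1,y2). map (\<lambda>(x1,x2). (x1*y1, x2*y2*(y'*y))) (D x)) (D x'))) z)"
      by (auto simp: z intro: teqA_trans)
  qed
  have S2a: "concat (map K (galois_map D ys)) = concat (map (\<lambda>(x',y'). concat (map (\<lambda>(y1,y2). K (y1, y2*y')) (D x'))) ys)"
    by (induct ys) (auto simp: galois_map_def split_def comp_def)
  have S2: "?R = concat (map K (galois_map D ys))"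
    unfolding S2a by (simp add: K_def split_def mult.assoc)
  have S3: "teqA t s (concat (map K (galois_map D ys))) (concat (map K [(v,1)]))"
  proof (rule teqA_bind[where t=t and s'=s])
    show "teqA t s (galois_map D ys) [(v, 1)]" using v by (simp add: tr_def)
    fix m m' n
    show "teqA t s (K (m + m', n)) (K (m, n) @ K (m', n))"
      unfolding K_def by (simp add: split_def, rule teqA_split_map) (simp add: distrib_left teqA_addL)
  next
    fix m n n'
    show "teqA t s (K (m, n + n')) (K (m, n) @ K (m, n'))"
      unfolding K_def by (simp add: split_def, rule teqA_split_map) (simp add: distrib_left distrib_right teqA_addR)
  next
    fix a m n
    have "teqA t s (map (\<lambda>(p,q). (p * m, q * (n*y))) (map (\<lambda>(p,q). (p * t a, q)) (D x)))
                   (map (\<lambda>(p,q). (p * m, q * (n*y))) (map (\<lambda>(p,q). (p, q * s a)) (D x)))"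
      by (rule teqA_rm12[OF Dtak])
    then show "teqA t s (K (t a * m, n)) (K (m, s a * n))"
      unfolding K_def by (simp add: map_map comp_def split_def mult.assoc)
  qed
  have S4: "concat (map K [(v,1)]) = map (\<lambda>(p,q). (p * v, q * y)) (D x)"
    by (simp add: K_def)
  show ?thesis using S1 S2 S3 S4 by (auto intro: teqA_trans)
qed

lemma tr_mult:
  assumes u: "tr u xs" and v: "tr v ys"
  shows "tr (u*v) (concat (map (\<lambda>(x,y). map (\<lambda>(x',y'). (x * x', y' * y)) ys) xs))"
proof -
  have "galois_map D (concat (map (\<lambda>(x,y). map (\<lambda>(x',y'). (x * x', y' * y)) ys) xs))
     = concat (map (\<lambda>(x,y). galois_map D (map (\<lambda>(x',y'). (x * x', y' * y)) ys)) xs)"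
    by (simp add: galois_concat map_map comp_def split_def)
  moreover have "teqA t s (concat (map (\<lambda>(x,y). galois_map D (map (\<lambda>(x',y'). (x * x', y' * y)) ys)) xs))
     (concat (map (\<lambda>(x,y). map (\<lambda>(p,q). (p * v, q * y)) (D x)) xs))"
    by (rule teqA_concat) (use claimM[OF v] in auto)
  moreover have "concat (map (\<lambda>(x,y). map (\<lambda>(p,q). (p * v, q * y)) (D x)) xs) = map (\<lambda>(p,q). (p * v, q)) (galois_map D xs)"
    by (simp add: galois_map_def map_concat map_map comp_def split_def)
  moreover have "teqA t s (map (\<lambda>(p,q). (p * v, q)) (galois_map D xs)) (map (\<lambda>(p,q). (p * v, q)) [(u,1)])"
    by (rule teqA_rm1) (use u in \<open>simp add: tr_def\<close>)
  ultimately show ?thesis unfolding tr_def by (auto intro: teqA_trans)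
qed

lemma ev_append: "ev (xs @ ys) b = ev xs b + ev ys b" by (simp add: ev_def)
lemma ev_sl: "ev (map (\<lambda>(x,y). (c * x, y)) xs) b = c * ev xs b"
  by (induct xs) (auto simp: ev_def algebra_simps)
lemma ev_tl: "ev (map (\<lambda>(x,y). (x, y * c)) xs) b = ev xs b * c"
  by (induct xs) (auto simp: ev_def algebra_simps)
lemma ev_sr: "ev (map (\<lambda>(x,y). (x * c, y)) xs) b = ev xs (c * b)"
  by (induct xs) (auto simp: ev_def algebra_simps)
lemma ev_tr: "ev (map (\<lambda>(x,y). (x, c * y)) xs) b = ev xs (b * c)"
  by (induct xs) (auto simp: ev_def algebra_simps)

lemma ev_inner: "ev (map (\<lambda>(x',y'). (x * x', y' * y)) ys) b = x * ev ys b * y"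
  by (induct ys) (auto simp: ev_def algebra_simps)
lemma ev_mult: "ev (concat (map (\<lambda>(x,y). map (\<lambda>(x',y'). (x * x', y' * y)) ys) xs)) b = ev xs (ev ys b)"
proof (induct xs)
  case Nil then show ?case by (simp add: ev_def)
next
  case (Cons z xs)
  obtain x y where z: "z = (x,y)" by fastforce
  show ?case using Cons by (simp add: z ev_append ev_inner) (simp add: ev_def)
qed

lemma act_add_u: "b \<in> Cm \<Longrightarrow> A (u+v) b = A u b + A v b"
proof -
  assume b: "b \<in> Cm"
  have "A (u+v) b = ev (translation s t D u @ translation s t D v) b"
    by (rule act_eq[OF b tr_add[OF tr_transl tr_transl]])
  then show ?thesis by (simp add: ev_def A_def')
qed

lemma act_add_b: "A u (b+b') = A u b + A u b'"
  by (simp add: A_def' ev_def distrib_left distrib_right split_def sum_list_addf)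

lemma act_sl: "b \<in> Cm \<Longrightarrow> A (s a * u) b = s a * A u b"
proof -
  assume b: "b \<in> Cm"
  have "A (s a * u) b = ev (map (\<lambda>(x,y). (s a * x, y)) (translation s t D u)) b"
    by (rule act_eq[OF b tr_sl[OF tr_transl]])
  then show ?thesis by (simp add: A_def' ev_sl)
qed

lemma act_tl: "b \<in> Cm \<Longrightarrow> A (t a * u) b = A u b * s a"
proof -
  assume b: "b \<in> Cm"
  have "A (t a * u) b = ev (map (\<lambda>(x,y). (x, y * s a)) (translation s t D u)) b"
    by (rule act_eq[OF b tr_tl[OF tr_transl]])
  then show ?thesis by (simp add: A_def' ev_tl)
qed

lemma act_sr: "b \<in> Cm \<Longrightarrow> A (u * s a) b = A u (s a * b)"
proof -
  assume b: "b \<in> Cm"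
  have "A (u * s a) b = ev (map (\<lambda>(x,y). (x * s a, y)) (translation s t D u)) b"
    by (rule act_eq[OF b tr_sr[OF tr_transl]])
  then show ?thesis by (simp add: A_def' ev_sr)
qed

lemma act_tr: "b \<in> Cm \<Longrightarrow> A (u * t a) b = A u (b * s a)"
proof -
  assume b: "b \<in> Cm"
  have "A (u * t a) b = ev (map (\<lambda>(x,y). (x, s a * y)) (translation s t D u)) b"
    by (rule act_eq[OF b tr_tr[OF tr_transl]])
  then show ?thesis by (simp add: A_def' ev_tr)
qed

lemma act_one: "b \<in> Cm \<Longrightarrow> A 1 b = b"
  using act_eq[OF _ tr_one] by (simp add: ev_def)

lemma act_mult: "b \<in> Cm \<Longrightarrow> A (u * v) b = A u (A v b)"
proof -
  assume b: "b \<in> Cm"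
  let ?xs = "translation s t D u" and ?ys = "translation s t D v"
  have "A (u * v) b = ev (concat (map (\<lambda>(x,y). map (\<lambda>(x',y'). (x * x', y' * y)) ?ys) ?xs)) b"
    by (rule act_eq[OF b tr_mult[OF tr_transl tr_transl]])
  also have "\<dots> = ev ?xs (ev ?ys b)"
    by (rule ev_mult)
  finally show ?thesis by (simp add: A_def')
qed

lemma act_Cm: "b \<in> Cm \<Longrightarrow> A u b \<in> Cm"
proof -
  assume b: "b \<in> Cm"
  have bc: "\<And>a n. t a * (b * n) = b * (t a * n)" using b by (simp add: Cm_def mult.assoc[symmetric])
  { fix a
    have "ev (map (\<lambda>(x,y). (t a * x, y)) (translation s t D u)) b
        = ev (map (\<lambda>(x,y). (x, y * t a)) (translation s t D u)) b"
      unfolding ev_def by (rule teqAop_univ[OF _ _ _ tr_comm[OF tr_transl]])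
         (auto simp: distrib_left distrib_right mult.assoc bc)
    then have "t a * A u b = A u b * t a"
      by (simp add: A_def' ev_sl ev_tl) }
  then show ?thesis by (simp add: Cm_def)
qed

lemma act_unit: "A u 1 = s (e u)"
proof -
  let ?xs = "translation s t D u"
  have "sum_list (map (\<lambda>(p,q). s (e p) * q) (galois_map D ?xs)) = sum_list (map (\<lambda>(p,q). s (e p) * q) [(u,1)])"
    by (rule teqA_univ[OF _ _ _ tr_transl[unfolded tr_def]])
       (auto simp: distrib_left distrib_right e_add s_add e_t s_mult mult.assoc)
  moreover have "sum_list (map (\<lambda>(p,q). s (e p) * q) (galois_map D ?xs)) = ev ?xs 1"
    unfolding galois_sum ev_def
    by (rule arg_cong[where f=sum_list], rule map_cong[OF refl])
       (auto simp: mult.assoc[symmetric] sum_list_mult_const counit1[unfolded split_def] split_def)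
  ultimately show ?thesis by (simp add: A_def')
qed

end



lemma sum_list_map_concat: "sum_list (map f (concat L)) = sum_list (map (\<lambda>l. sum_list (map f l)) L)"
  by (induct L) auto

lemma sum_list_mult_assoc: "(\<Sum>x\<leftarrow>L. f x * (g x * (y::'a::{ring,monoid_mult}))) = (\<Sum>x\<leftarrow>L. f x * g x) * y"
  by (simp add: sum_list_mult_const[symmetric] mult.assoc)

context LHK begin

lemma ev_concat: "ev (concat (map f L)) b = sum_list (map (\<lambda>z. ev (f z) b) L)"
  by (induct L) (auto simp: ev_append, simp add: ev_def)

lemma Yc: assumes b: "b \<in> Cm" shows "sum_list (map (\<lambda>(x1,x2). A x1 b * x2) (D x)) = x * b"
proof -
  define Ys where "Ys = concat (map (\<lambda>(x1,x2). map (\<lambda>(p,q). (p, q * x2)) (translation s t D x1)) (D x))"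
  have "galois_map D Ys = concat (map (\<lambda>(x1,x2). map (\<lambda>(p,q). (p, q*x2)) (galois_map D (translation s t D x1))) (D x))"
    unfolding Ys_def galois_concat map_map by (simp add: comp_def split_def galois_rm2[unfolded split_def])
  moreover have "teqA t s (concat (map (\<lambda>(x1,x2). map (\<lambda>(p,q). (p, q*x2)) (galois_map D (translation s t D x1))) (D x)))
        (concat (map (\<lambda>(x1,x2). [(x1, x2)]) (D x)))"
  proof (rule teqA_concat)
    fix z assume "z \<in> set (D x)"
    obtain x1 x2 where z: "z = (x1,x2)" by fastforce
    show "teqA t s ((\<lambda>(x1,x2). map (\<lambda>(p,q). (p, q*x2)) (galois_map D (translation s t D x1))) z) ((\<lambda>(x1,x2). [(x1, x2)]) z)"
      using teqA_rm2[OF tr_transl[unfolded tr_def], of x2 x1] by (simp add: z)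
  qed
  moreover have "concat (map (\<lambda>(x1,x2). [(x1, x2)]) (D x)) = galois_map D [(x,1)]"
    by (simp add: galois_map_def) (induct "D x", auto)
  ultimately have "teqA t s (galois_map D Ys) (galois_map D [(x,1)])" by simp
  then have op: "teqAop t Ys [(x,1)]" by (rule Hinj)
  have bc: "\<And>a n. t a * (b * n) = b * (t a * n)" using b by (simp add: Cm_def mult.assoc[symmetric])
  have "ev Ys b = ev [(x,1)] b" unfolding ev_def
    by (rule teqAop_univ[OF _ _ _ op]) (auto simp: distrib_left distrib_right mult.assoc bc)
  moreover have "ev Ys b = sum_list (map (\<lambda>(x1,x2). A x1 b * x2) (D x))"
    unfolding Ys_def ev_concat by (simp add: split_def ev_tl[unfolded split_def] A_def')
  ultimately show ?thesis by (simp add: ev_def)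
qed

lemma Theta_univ:
  assumes b: "b \<in> Cm" and b': "b' \<in> Cm" and h: "teqA t s L1 L2"
  shows "sum_list (map (\<lambda>(p,q). A p b * A q b' * n) L1) = sum_list (map (\<lambda>(p,q). A p b * A q b' * n) L2)"
  by (rule teqA_univ[OF _ _ _ h])
     (auto simp: act_add_u[OF b] act_add_u[OF b'] act_tl[OF b] act_sl[OF b'] distrib_left distrib_right mult.assoc)

lemma modalg:
  assumes b: "b \<in> Cm" and b': "b' \<in> Cm"
  shows "A u (b * b') = sum_list (map (\<lambda>(x1,x2). A x1 b * A x2 b') (D u))"
proof -
  define \<Gamma> where "\<Gamma> = (\<lambda>(P,Q). sum_list (map (\<lambda>(p,q). A p b * A q b' * Q) (D P)))"
  let ?xs = "translation s t D u"
  have G: "sum_list (map \<Gamma> (galois_map D ?xs)) = sum_list (map \<Gamma> [(u,1)])"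
  proof (rule teqA_univ[OF _ _ _ tr_transl[unfolded tr_def]])
    fix m m' n
    show "\<Gamma> (m + m', n) = \<Gamma> (m, n) + \<Gamma> (m', n)"
      unfolding \<Gamma>_def using Theta_univ[OF b b' Dadd[of m m'], of n] by simp
  next
    fix m n n'
    show "\<Gamma> (m, n + n') = \<Gamma> (m, n) + \<Gamma> (m, n')"
      unfolding \<Gamma>_def by (simp add: split_def distrib_left sum_list_addf)
  next
    fix a m n
    have "\<Gamma> (t a * m, n) = sum_list (map (\<lambda>(p,q). A p b * A q b' * n) (map (\<lambda>(x, y). (x, t a * y)) (D m)))"
      unfolding \<Gamma>_def using Theta_univ[OF b b' Dt[of a m], of n] by simp
    also have "\<dots> = \<Gamma> (m, s a * n)"
      unfolding \<Gamma>_def by (simp add: split_def comp_def act_tl[OF b'] mult.assoc)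
    finally show "\<Gamma> (t a * m, n) = \<Gamma> (m, s a * n)" .
  qed
  have R: "sum_list (map \<Gamma> [(u,1)]) = sum_list (map (\<lambda>(x1,x2). A x1 b * A x2 b') (D u))"
    by (simp add: \<Gamma>_def)
  have inner: "sum_list (map (\<lambda>(x1,x2). \<Gamma> (x1, x2*y)) (D x)) = x * b * b' * y" for x y
  proof -
    define \<phi>3 where "\<phi>3 = (\<lambda>(a1::'u,a2::'u,a3::'u). A a1 b * A a2 b' * (a3 * y))"
    have "sum_list (map (\<lambda>(x1,x2). \<Gamma> (x1, x2*y)) (D x))
        = sum_list (map \<phi>3 (concat (map (\<lambda>(x1, x2). map (\<lambda>(y1, y2). (y1, y2, x2)) (D x1)) (D x))))"
      by (simp add: sum_list_map_concat \<Gamma>_def \<phi>3_def split_def comp_def)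
    also have "\<dots> = sum_list (map \<phi>3 (concat (map (\<lambda>(x1, x2). map (\<lambda>(y1, y2). (x1, y1, y2)) (D x2)) (D x))))"
      by (rule teq3_univ[OF _ _ _ _ _ Dcoass[unfolded teqA3_def]])
         (auto simp: \<phi>3_def act_add_u[OF b] act_add_u[OF b'] act_tl[OF b] act_tl[OF b'] act_sl[OF b']
                     distrib_left distrib_right mult.assoc)
    also have "\<dots> = sum_list (map (\<lambda>(x1,x2). A x1 b * (sum_list (map (\<lambda>(y1,y2). A y1 b' * y2) (D x2))) * y) (D x))"
      unfolding sum_list_map_concat map_map
      by (rule arg_cong[where f=sum_list], rule map_cong[OF refl])
         (auto simp: \<phi>3_def split_def comp_def sum_list_const_mult[symmetric] sum_list_mult_const[symmetric] mult.assoc)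
    also have "\<dots> = sum_list (map (\<lambda>(x1,x2). A x1 b * x2) (D x)) * b' * y"
      by (simp add: Yc[OF b', unfolded split_def] split_def mult.assoc sum_list_mult_const[symmetric])
    also have "\<dots> = x * b * b' * y" by (simp add: Yc[OF b])
    finally show ?thesis .
  qed
  have "sum_list (map \<Gamma> (galois_map D ?xs)) = ev ?xs (b * b')"
    unfolding galois_sum ev_def
    by (rule arg_cong[where f=sum_list], rule map_cong[OF refl]) (auto simp: inner mult.assoc)
  then show ?thesis using G R by (simp add: A_def')
qed

end



lemma teqA_map_pw: "(\<And>z. z \<in> set L \<Longrightarrow> teqA t s' [f z] [g z]) \<Longrightarrow> teqA t s' (map f L) (map g L)"
proof -
  assume h: "\<And>z. z \<in> set L \<Longrightarrow> teqA t s' [f z] [g z]"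
  have "teqA t s' (concat (map (\<lambda>z. [f z]) L)) (concat (map (\<lambda>z. [g z]) L))" by (rule teqA_concat) (rule h)
  moreover have "concat (map (\<lambda>z. [h z]) L) = map h L" for h by (induct L) auto
  ultimately show ?thesis by simp
qed

lemma teqA_concat_app: "teqA t s' (concat (map (\<lambda>z. f z @ g z) L)) (concat (map f L) @ concat (map g L))"
  by (rule teqA_mset) (induct L, auto)

lemma sum_list_swap: "sum_list (map (\<lambda>a. sum_list (map (g a) L2)) L1) = sum_list (map (\<lambda>b. sum_list (map (\<lambda>a. g a b) L1)) L2)"
  for g :: "'a \<Rightarrow> 'b \<Rightarrow> 'c::comm_monoid_add"
  by (induct L1) (auto simp: sum_list_addf)

lemma mset_cm: "mset (concat (map F L)) = sum_list (map (\<lambda>a. mset (F a)) L)"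
  by (induct L) auto
lemma mset_m: "mset (map f L) = sum_list (map (\<lambda>a. {#f a#}) L)"
  by (induct L) auto

lemma mset_triple: "mset (concat (map (\<lambda>a. concat (map (\<lambda>b. map (\<lambda>c. f a b c) L3) L2)) L1))
   = mset (concat (map (\<lambda>b. concat (map (\<lambda>c. map (\<lambda>a. f a b c) L1) L3)) L2))"
proof -
  have "mset (concat (map (\<lambda>a. concat (map (\<lambda>b. map (\<lambda>c. f a b c) L3) L2)) L1))
      = sum_list (map (\<lambda>a. sum_list (map (\<lambda>b. sum_list (map (\<lambda>c. {#f a b c#}) L3)) L2)) L1)"
    by (simp add: mset_cm mset_m)
  also have "\<dots> = sum_list (map (\<lambda>b. sum_list (map (\<lambda>a. sum_list (map (\<lambda>c. {#f a b c#}) L3)) L1)) L2)"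
    by (rule sum_list_swap)
  also have "\<dots> = sum_list (map (\<lambda>b. sum_list (map (\<lambda>c. sum_list (map (\<lambda>a. {#f a b c#}) L1)) L3)) L2)"
    by (rule arg_cong[where f=sum_list], rule map_cong[OF refl], rule sum_list_swap)
  also have "\<dots> = mset (concat (map (\<lambda>b. concat (map (\<lambda>c. map (\<lambda>a. f a b c) L1) L3)) L2))"
    by (simp add: mset_cm mset_m)
  finally show ?thesis .
qed

lemma teqA3_bind:
  fixes F :: "'u::ring \<times> 'u \<times> 'u \<Rightarrow> ('x::ring \<times> 'y::ring) list"
  assumes a1: "\<And>m m' n p. teqA t' s'' (F (m+m', n, p)) (F (m,n,p) @ F (m',n,p))"
    and a2: "\<And>m n n' p. teqA t' s'' (F (m, n+n', p)) (F (m,n,p) @ F (m,n',p))"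
    and a3: "\<And>m n p p'. teqA t' s'' (F (m, n, p+p')) (F (m,n,p) @ F (m,n,p'))"
    and a4: "\<And>m a n p. teqA t' s'' (F (t a * m, n, p)) (F (m, s a * n, p))"
    and a5: "\<And>m a n p. teqA t' s'' (F (m, t a * n, p)) (F (m, n, s a * p))"
    and h: "teqA3 s t xs ys"
  shows "teqA t' s'' (concat (map F xs)) (concat (map F ys))"
  using assms unfolding teqA_def teq_zeq teqA3_def by (intro teq3_bind) auto

context LHK begin

lemma D_zero: "teqA t s (D 0) []"
  by (rule teqA_cancel[where b="D 0" and a="D 0"]) (use Dadd[of 0 0] teqA_sym in auto)

lemma D_sum: "teqA t s (D (sum_list (map f L))) (concat (map (\<lambda>z. D (f z)) L))"
proof (induct L)
  case Nil then show ?case by (simp add: D_zero)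
next
  case (Cons z L)
  have "teqA t s (D (f z + sum_list (map f L))) (D (f z) @ D (sum_list (map f L)))" by (rule Dadd)
  moreover have "teqA t s (D (f z) @ D (sum_list (map f L))) (D (f z) @ concat (map (\<lambda>z. D (f z)) L))"
    by (rule teqA_append) (use Cons in auto)
  ultimately show ?case by (auto intro: teqA_trans)
qed

end



lemma cms: "concat (map (\<lambda>z. [h z]) L) = map h L" by (induct L) auto

lemma concat_map_concat: "concat (map f (concat L)) = concat (map (\<lambda>l. concat (map f l)) L)"
  by (induct L) auto

context LHK begin

lemma Cm_comm: "c \<in> Cm \<Longrightarrow> c * t a = t a * c" by (simp add: Cm_def)

lemma E_ident:
  assumes b: "b \<in> Cm"
  shows "teqA t s (concat (map (\<lambda>(x,y). concat (map (\<lambda>(x1,x2). map (\<lambda>(y1,y2). (x1 * b * y1, x2 * y2)) (D y)) (D x))) (translation s t D u))) [(A u b, 1)]"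
proof -
  let ?xs = "translation s t D u"
  define H where "H = (\<lambda>(M,N). map (\<lambda>(N1,N2). (A M b * N1, N2)) (D N))"
  define F where "F = (\<lambda>P R. concat (map (\<lambda>(x1,x2). map (\<lambda>(y1,y2). (x1 * b * y1, x2 * y2)) (D R)) (D P)))"
  have AC: "\<And>M. A M b \<in> Cm" by (rule act_Cm[OF b])
  have H3: "teqA t s (concat (map H (galois_map D ?xs))) (concat (map H [(u,1)]))"
  proof (rule teqA_bind[where t=t and s'=s])
    show "teqA t s (galois_map D ?xs) [(u, 1)]" using tr_transl by (simp add: tr_def)
    fix m m' n
    show "teqA t s (H (m + m', n)) (H (m, n) @ H (m', n))"
      unfolding H_def by (simp add: split_def, rule teqA_split_map) (simp add: act_add_u[OF b] distrib_right teqA_addL)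
  next
    fix m n n'
    have "teqA t s (map (\<lambda>(N1,N2). (A m b * N1, N2)) (D (n+n'))) (map (\<lambda>(N1,N2). (A m b * N1, N2)) (D n @ D n'))"
      by (rule teqA_lm1[OF _ Dadd]) (use AC Cm_comm in auto)
    then show "teqA t s (H (m, n + n')) (H (m, n) @ H (m, n'))" unfolding H_def by simp
  next
    fix a m n
    have "teqA t s (map (\<lambda>(N1,N2). (A m b * N1, N2)) (D (s a * n))) (map (\<lambda>(N1,N2). (A m b * N1, N2)) (map (\<lambda>(x, y). (s a * x, y)) (D n)))"
      by (rule teqA_lm1[OF _ Ds]) (use AC Cm_comm in auto)
    then show "teqA t s (H (t a * m, n)) (H (m, s a * n))"
      unfolding H_def by (simp add: act_tl[OF b] map_map comp_def split_def mult.assoc teqA_sym)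
  qed
  have Hu: "teqA t s (concat (map H [(u,1)])) [(A u b, 1)]"
    using teqA_lm1[OF _ Done, of "A u b"] AC Cm_comm by (simp add: H_def)
  have C2g: "concat (map (\<lambda>(x,y). concat (map (\<lambda>(P1,P2). H (P1, P2*y)) (D x))) L) = concat (map H (galois_map D L))" for L
    by (induct L) (auto simp: galois_map_def split_def comp_def)
  note C2 = C2g[of ?xs]
  have C1: "teqA t s (F P R) (concat (map (\<lambda>(P1,P2). H (P1, P2*R)) (D P)))" for P R
  proof -
    define \<Phi>3 where "\<Phi>3 = (\<lambda>(a1,a2,a3). map (\<lambda>(r1,r2). (A a1 b * (a2 * r1), a3 * r2)) (D R))"
    let ?coR = "concat (map (\<lambda>(x1, x2). map (\<lambda>(y1, y2). (x1, y1, y2)) (D x2)) (D P))"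
    let ?coL = "concat (map (\<lambda>(x1, x2). map (\<lambda>(y1, y2). (y1, y2, x2)) (D x1)) (D P))"
    have sa: "teqA t s (concat (map (\<lambda>(P1,P2). H (P1, P2*R)) (D P))) (concat (map \<Phi>3 ?coR))"
    proof -
      have "concat (map \<Phi>3 ?coR) = concat (map (\<lambda>(x1,x2). concat (map (\<lambda>(y1,y2). \<Phi>3 (x1,y1,y2)) (D x2))) (D P))"
        by (simp add: concat_map_concat map_map split_def comp_def)
      moreover have "teqA t s (concat (map (\<lambda>(P1,P2). H (P1, P2*R)) (D P))) (concat (map (\<lambda>(x1,x2). concat (map (\<lambda>(y1,y2). \<Phi>3 (x1,y1,y2)) (D x2))) (D P)))"
      proof (rule teqA_concat)
        fix z assume "z \<in> set (D P)"
        obtain P1 P2 where z: "z = (P1,P2)" by fastforce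
        have "teqA t s (map (\<lambda>(N1,N2). (A P1 b * N1, N2)) (D (P2*R)))
            (map (\<lambda>(N1,N2). (A P1 b * N1, N2)) (concat (map (\<lambda>(x1, x2). map (\<lambda>(y1, y2). (x1 * y1, x2 * y2)) (D R)) (D P2))))"
          by (rule teqA_lm1[OF _ Dmult]) (use AC Cm_comm in auto)
        then show "teqA t s ((\<lambda>(P1,P2). H (P1, P2*R)) z) ((\<lambda>(x1,x2). concat (map (\<lambda>(y1,y2). \<Phi>3 (x1,y1,y2)) (D x2))) z)"
          by (simp add: z H_def \<Phi>3_def map_concat comp_def split_def)
      qed
      ultimately show ?thesis by simp
    qed
    have sb: "teqA t s (concat (map \<Phi>3 ?coR)) (concat (map \<Phi>3 ?coL))"
    proof (rule teqA3_bind[where s=s and t=t])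
      show "teqA3 s t ?coR ?coL" using Dcoass[of P] unfolding teqA3_def teq3_zeq by (rule zeq_sym)
    next
      fix m m' n p
      show "teqA t s (\<Phi>3 (m + m', n, p)) (\<Phi>3 (m, n, p) @ \<Phi>3 (m', n, p))"
        unfolding \<Phi>3_def by (simp add: split_def, rule teqA_split_map) (simp add: act_add_u[OF b] distrib_right teqA_addL)
    next
      fix m n n' p
      show "teqA t s (\<Phi>3 (m, n + n', p)) (\<Phi>3 (m, n, p) @ \<Phi>3 (m, n', p))"
        unfolding \<Phi>3_def by (simp add: split_def, rule teqA_split_map) (simp add: distrib_right distrib_left teqA_addL)
    next
      fix m n p p'
      show "teqA t s (\<Phi>3 (m, n, p + p')) (\<Phi>3 (m, n, p) @ \<Phi>3 (m, n, p'))"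
        unfolding \<Phi>3_def by (simp add: split_def, rule teqA_split_map) (simp add: distrib_right teqA_addR)
    next
      fix m a n p
      show "teqA t s (\<Phi>3 (t a * m, n, p)) (\<Phi>3 (m, s a * n, p))"
        unfolding \<Phi>3_def by (simp add: act_tl[OF b] mult.assoc)
    next
      fix m a n p
      have e: "A m b * (t a * X) = t a * (A m b * X)" for X
        using Cm_comm[OF AC[of m], of a] by (simp add: mult.assoc[symmetric])
      show "teqA t s (\<Phi>3 (m, t a * n, p)) (\<Phi>3 (m, n, s a * p))"
        unfolding \<Phi>3_def
        by (simp add: split_def, rule teqA_map_pw) (simp add: mult.assoc e teqA_bal)
    qed
    have sc: "teqA t s (concat (map \<Phi>3 ?coL)) (F P R)"
    proof -
      have "concat (map \<Phi>3 ?coL) = concat (map (\<lambda>(x1,x2). concat (map (\<lambda>(y1,y2). map (\<lambda>(r1,r2). (A y1 b * (y2 * r1), x2 * r2)) (D R)) (D x1))) (D P))"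
        by (simp add: concat_map_concat map_map \<Phi>3_def split_def comp_def)
      moreover have "teqA t s (concat (map (\<lambda>(x1,x2). concat (map (\<lambda>(y1,y2). map (\<lambda>(r1,r2). (A y1 b * (y2 * r1), x2 * r2)) (D R)) (D x1))) (D P))) (F P R)"
        unfolding F_def
      proof (rule teqA_concat)
        fix z assume "z \<in> set (D P)"
        obtain x1 x2 where z: "z = (x1,x2)" by fastforce
        have m1: "teqA t s (concat (map (\<lambda>(y1,y2). map (\<lambda>(r1,r2). (A y1 b * (y2 * r1), x2 * r2)) (D R)) (D x1)))
             (concat (map (\<lambda>(r1,r2). map (\<lambda>(y1,y2). (A y1 b * (y2 * r1), x2 * r2)) (D x1)) (D R)))"
          by (rule teqA_mset, rule mset_swap2)
        have m2: "teqA t s (concat (map (\<lambda>(r1,r2). map (\<lambda>(y1,y2). (A y1 b * (y2 * r1), x2 * r2)) (D x1)) (D R)))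
             (concat (map (\<lambda>(r1,r2). [(x1 * b * r1, x2 * r2)]) (D R)))"
        proof (rule teqA_concat)
          fix w assume "w \<in> set (D R)"
          obtain r1 r2 where w: "w = (r1,r2)" by fastforce
          have sm: "sum_list (map (\<lambda>(y1,y2). A y1 b * (y2 * r1)) (D x1)) = x1 * b * r1"
            using Yc[OF b, of x1] by (simp add: split_def sum_list_mult_assoc)
          have "teqA t s (map (\<lambda>m. (m, x2*r2)) (map (\<lambda>(y1,y2). A y1 b * (y2 * r1)) (D x1)))
               [(sum_list (map (\<lambda>(y1,y2). A y1 b * (y2 * r1)) (D x1)), x2*r2)]"
            by (rule teqA_sym, rule teqA_sumL)
          then show "teqA t s ((\<lambda>(r1,r2). map (\<lambda>(y1,y2). (A y1 b * (y2 * r1), x2 * r2)) (D x1)) w) ((\<lambda>(r1,r2). [(x1 * b * r1, x2 * r2)]) w)"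
            by (simp add: w sm[unfolded split_def] map_map comp_def split_def)
        qed
        have m3: "concat (map (\<lambda>(r1,r2). [(x1 * b * r1, x2 * r2)]) (D R)) = map (\<lambda>(y1,y2). (x1 * b * y1, x2 * y2)) (D R)"
          using cms[of "\<lambda>p. (x1 * b * fst p, x2 * snd p)" "D R"] by (simp add: split_def)
        show "teqA t s ((\<lambda>(x1,x2). concat (map (\<lambda>(y1,y2). map (\<lambda>(r1,r2). (A y1 b * (y2 * r1), x2 * r2)) (D R)) (D x1))) z)
             ((\<lambda>(x1, x2). map (\<lambda>(y1, y2). (x1 * b * y1, x2 * y2)) (D R)) z)"
          using m1 m2 m3 by (auto simp: z intro: teqA_trans)
      qed
      ultimately show ?thesis by simp
    qed
    show ?thesis using sa sb sc by (meson teqA_sym teqA_trans)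
  qed
  have "teqA t s (concat (map (\<lambda>(x,y). F x y) ?xs)) (concat (map (\<lambda>(x,y). concat (map (\<lambda>(P1,P2). H (P1, P2*y)) (D x))) ?xs))"
    by (rule teqA_concat) (auto simp: C1)
  then have "teqA t s (concat (map (\<lambda>(x,y). F x y) ?xs)) [(A u b, 1)]"
    using C2 H3 Hu by (auto intro: teqA_trans)
  then show ?thesis by (simp add: F_def)
qed

end



lemma cc: "concat (concat L) = concat (map concat L)" by (induct L) auto

context LHK begin

lemma act_B:
  assumes bB: "b \<in> Bk"
  shows "A u b \<in> Bk"
proof -
  have b: "b \<in> Cm" by (rule B_Cm[OF bB])
  let ?xs = "translation s t D u"
  let ?c = "A u b"
  define F where "F = (\<lambda>x y. concat (map (\<lambda>(x1,x2). map (\<lambda>(y1,y2). (x1 * b * y1, x2 * y2)) (D y)) (D x)))"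
  define PI where "PI = map (\<lambda>(x::'u,y). (x, \<pi> y))"
  have K1: "teqA t s (D ?c) (concat (map (\<lambda>(x,y). D (x*b*y)) ?xs))"
    using D_sum[of "\<lambda>(x,y). x*b*y" ?xs] by (simp add: A_def' ev_def split_def)
  have K2: "teqA t sV (PI (D (x*b*y))) (PI (F x y))" for x y
  proof -
    define Z where "Z = (\<lambda>(z1,z2). map (\<lambda>(y1,y2). (z1*y1, z2*y2)) (D y))"
    have z1: "teqA t s (D ((x*b)*y)) (concat (map Z (D (x*b))))"
      using Dmult[of "x*b" y] by (simp add: Z_def)
    have z2: "teqA t s (concat (map Z (D (x*b)))) (concat (map Z (concat (map (\<lambda>(x1,x2). map (\<lambda>(b1,b2). (x1*b1, x2*b2)) (D b)) (D x)))))"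
    proof (rule teqA_bind[OF _ _ _ Dmult])
      fix m m' n
      show "teqA t s (Z (m + m', n)) (Z (m, n) @ Z (m', n))"
        unfolding Z_def by (simp add: split_def, rule teqA_split_map) (simp add: distrib_right teqA_addL)
    next
      fix m n n'
      show "teqA t s (Z (m, n + n')) (Z (m, n) @ Z (m, n'))"
        unfolding Z_def by (simp add: split_def, rule teqA_split_map) (simp add: distrib_right teqA_addR)
    next
      fix a m n
      show "teqA t s (Z (t a * m, n)) (Z (m, s a * n))"
        unfolding Z_def by (simp add: split_def, rule teqA_map_pw) (simp add: mult.assoc teqA_bal)
    qed
    define L where "L = concat (map (\<lambda>(x1,x2). concat (map (\<lambda>(b1,b2). map (\<lambda>(y1,y2). (x1*b1*y1, \<pi> x2 * \<pi> b2 * \<pi> y2)) (D y)) (D b))) (D x))"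
    have z3: "PI (concat (map Z (concat (map (\<lambda>(x1,x2). map (\<lambda>(b1,b2). (x1*b1, x2*b2)) (D b)) (D x))))) = L"
      by (simp add: PI_def L_def Z_def concat_map_concat map_concat map_map comp_def split_def pi_mult cc)
    define Fb where "Fb = (\<lambda>(B1,B2). concat (map (\<lambda>(y1,y2). map (\<lambda>(x1,x2). (x1*B1*y1, \<pi> x2 * B2 * \<pi> y2)) (D x)) (D y)))"
    have z4: "teqA t sV L (concat (map Fb (PI (D b))))"
    proof (rule teqA_mset)
      have "mset L = mset (concat (map (\<lambda>q. concat (map (\<lambda>r. map (\<lambda>p. (fst p * fst q * fst r, \<pi> (snd p) * \<pi> (snd q) * \<pi> (snd r))) (D x)) (D y))) (D b)))"
        using mset_triple[of "\<lambda>p q r. (fst p * fst q * fst r, \<pi> (snd p) * \<pi> (snd q) * \<pi> (snd r))" "D y" "D b" "D x"]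
        by (simp add: L_def split_def)
      then show "mset L = mset (concat (map Fb (PI (D b))))"
        by (simp add: Fb_def PI_def map_map comp_def split_def)
    qed
    have z5: "teqA t sV (concat (map Fb (PI (D b)))) (concat (map Fb [(b,1)]))"
    proof (rule teqA_bind[where t=t and s'=sV])
      show "teqA t sV (PI (D b)) [(b, 1)]" using bB by (simp add: Bk_iff PI_def)
    next
      fix m m' n
      have "teqA t sV (Fb (m + m', n)) (concat (map (\<lambda>(y1,y2). map (\<lambda>(x1,x2). (x1*m*y1, \<pi> x2 * n * \<pi> y2)) (D x) @ map (\<lambda>(x1,x2). (x1*m'*y1, \<pi> x2 * n * \<pi> y2)) (D x)) (D y)))"
        unfolding Fb_def
        by (simp, rule teqA_concat) (auto simp: split_def distrib_left distrib_right intro!: teqA_split_map teqA_addL)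
      moreover have "teqA t sV (concat (map (\<lambda>(y1,y2). map (\<lambda>(x1,x2). (x1*m*y1, \<pi> x2 * n * \<pi> y2)) (D x) @ map (\<lambda>(x1,x2). (x1*m'*y1, \<pi> x2 * n * \<pi> y2)) (D x)) (D y)))
          (Fb (m, n) @ Fb (m', n))"
        unfolding Fb_def using teqA_concat_app[where t=t and s'=sV] by (simp add: split_def)
      ultimately show "teqA t sV (Fb (m + m', n)) (Fb (m, n) @ Fb (m', n))" by (rule teqA_trans)
    next
      fix m n n'
      have "teqA t sV (Fb (m, n + n')) (concat (map (\<lambda>(y1,y2). map (\<lambda>(x1,x2). (x1*m*y1, \<pi> x2 * n * \<pi> y2)) (D x) @ map (\<lambda>(x1,x2). (x1*m*y1, \<pi> x2 * n' * \<pi> y2)) (D x)) (D y)))"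
        unfolding Fb_def
        by (simp, rule teqA_concat) (auto simp: split_def distrib_left distrib_right intro!: teqA_split_map teqA_addR)
      moreover have "teqA t sV (concat (map (\<lambda>(y1,y2). map (\<lambda>(x1,x2). (x1*m*y1, \<pi> x2 * n * \<pi> y2)) (D x) @ map (\<lambda>(x1,x2). (x1*m*y1, \<pi> x2 * n' * \<pi> y2)) (D x)) (D y)))
          (Fb (m, n) @ Fb (m, n'))"
        unfolding Fb_def using teqA_concat_app[where t=t and s'=sV] by (simp add: split_def)
      ultimately show "teqA t sV (Fb (m, n + n')) (Fb (m, n) @ Fb (m, n'))" by (rule teqA_trans)
    next
      fix a m n
      have tk: "teqA t sV (map (\<lambda>(p,q). (p * t a, \<pi> q)) (D x)) (map (\<lambda>(p,q). (p, \<pi> q * sV a)) (D x))"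
        using pimap[OF Dtak[of a x]] by (simp add: map_map comp_def split_def pi_mult pi_s)
      show "teqA t sV (Fb (t a * m, n)) (Fb (m, sV a * n))"
        unfolding Fb_def
      proof (simp, rule teqA_concat)
        fix w assume "w \<in> set (D y)"
        obtain y1 y2 where w: "w = (y1,y2)" by fastforce
        from teqA_rm12[OF tk, of "m * y1" "n * \<pi> y2"]
        show "teqA t sV ((\<lambda>(y1, y2). map (\<lambda>(x1, x2). (x1 * (t a * m) * y1, \<pi> x2 * n * \<pi> y2)) (D x)) w)
                       ((\<lambda>(y1, y2). map (\<lambda>(x1, x2). (x1 * m * y1, \<pi> x2 * (sV a * n) * \<pi> y2)) (D x)) w)"
          by (simp add: w map_map comp_def split_def mult.assoc)
      qed
    qed
    have z6: "teqA t sV (concat (map Fb [(b,1)])) (PI (F x y))"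
      unfolding F_def Fb_def PI_def
      by (simp, rule teqA_mset) (simp add: map_concat map_map comp_def split_def pi_mult, rule mset_swap)
    have "teqA t sV (PI (D (x*b*y))) (PI (concat (map Z (concat (map (\<lambda>(x1,x2). map (\<lambda>(b1,b2). (x1*b1, x2*b2)) (D b)) (D x))))))"
      unfolding PI_def by (rule pimap, rule teqA_trans[OF z1 z2])
    then show ?thesis using z3 z4 z5 z6 by (auto intro: teqA_trans)
  qed
  have "teqA t sV (PI (D ?c)) (PI (concat (map (\<lambda>(x,y). D (x*b*y)) ?xs)))"
    unfolding PI_def by (rule pimap[OF K1])
  moreover have "PI (concat (map (\<lambda>(x,y). D (x*b*y)) ?xs)) = concat (map (\<lambda>(x,y). PI (D (x*b*y))) ?xs)"
    by (simp add: PI_def map_concat comp_def split_def)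
  moreover have "teqA t sV (concat (map (\<lambda>(x,y). PI (D (x*b*y))) ?xs)) (concat (map (\<lambda>(x,y). PI (F x y)) ?xs))"
    by (rule teqA_concat) (auto simp: K2)
  moreover have "concat (map (\<lambda>(x,y). PI (F x y)) ?xs) = PI (concat (map (\<lambda>(x,y). F x y) ?xs))"
    by (simp add: PI_def map_concat comp_def split_def)
  moreover have "teqA t sV (PI (concat (map (\<lambda>(x,y). F x y) ?xs))) (PI [(?c, 1)])"
    unfolding PI_def by (rule pimap) (use E_ident[OF b, of u] in \<open>simp add: F_def\<close>)
  ultimately show ?thesis unfolding Bk_iff PI_def[symmetric] by (auto simp: PI_def intro: teqA_trans)
qed

end

theorem lemma2p6:
  fixes \<iota> :: "'k::{comm_ring,monoid_mult} \<Rightarrow> 'a::{ring,monoid_mult}"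
    and sU tU :: "'a \<Rightarrow> 'u::{ring,monoid_mult}" and \<Delta>U :: "'u \<Rightarrow> ('u \<times> 'u) list" and \<epsilon>U :: "'u \<Rightarrow> 'a"
    and sV tV :: "'a \<Rightarrow> 'v::{ring,monoid_mult}" and \<Delta>V :: "'v \<Rightarrow> ('v \<times> 'v) list" and \<epsilon>V :: "'v \<Rightarrow> 'a"
    and \<pi> :: "'u \<Rightarrow> 'v"
  assumes HU: "left_hopf_algebroid \<iota> sU tU \<Delta>U \<epsilon>U"
    and HV: "left_hopf_algebroid \<iota> sV tV \<Delta>V \<epsilon>V"
    and mor: "bialgebroid_morphism sU tU \<Delta>U \<epsilon>U sV tV \<Delta>V \<epsilon>V \<pi>"
    and surj: "surj \<pi>"
  defines "B \<equiv> left_hopf_kernel tU \<Delta>U sV \<pi>"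
    and "act \<equiv> hact sU tU \<Delta>U"
  shows
    \<comment> \<open>(i) B is an A-subring of U with unit map sU, commuting with tU(A)\<close>
    "(1 \<in> B \<and> (\<forall>b\<in>B. \<forall>b'\<in>B. b + b' \<in> B \<and> b * b' \<in> B) \<and> (\<forall>b\<in>B. - b \<in> B)
      \<and> (\<forall>a. sU a \<in> B) \<and> (\<forall>b\<in>B. \<forall>a. tU a * b = b * tU a))
   \<and>
    \<comment> \<open>(ii) well-definedness: independent of the representative of u_+ \<otimes> u_-, lands in B\<close>
    (\<forall>u xs ys. \<forall>b\<in>B. teqA tU sU (galois_map \<Delta>U xs) [(u, 1)]
        \<longrightarrow> teqA tU sU (galois_map \<Delta>U ys) [(u, 1)]
        \<longrightarrow> sum_list (map (\<lambda>(x, y). x * b * y) xs) = sum_list (map (\<lambda>(x, y). x * b * y) ys))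
   \<and> (\<forall>u. \<forall>b\<in>B. act u b \<in> B)
    \<comment> \<open>k-bilinear, i.e. defined on U \<otimes>_k B\<close>
   \<and> (\<forall>u u'. \<forall>b\<in>B. act (u + u') b = act u b + act u' b)
   \<and> (\<forall>u. \<forall>b\<in>B. \<forall>b'\<in>B. act u (b + b') = act u b + act u b')
   \<and> (\<forall>c u. \<forall>b\<in>B. act (sU (\<iota> c) * u) b = sU (\<iota> c) * act u b)
   \<and> (\<forall>c u. \<forall>b\<in>B. act u (sU (\<iota> c) * b) = sU (\<iota> c) * act u b)
    \<comment> \<open>descends to U \<otimes>_{A^e} B: (u \<blacktriangleleft> a) \<rightharpoonup> b = u \<rightharpoonup> (a \<triangleright> b), (a \<blacktriangleright> u) \<rightharpoonup> b = u \<rightharpoonup> (b \<blacktriangleleft> a)\<close>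
   \<and> (\<forall>u a. \<forall>b\<in>B. act (u * sU a) b = act u (sU a * b))
   \<and> (\<forall>u a. \<forall>b\<in>B. act (u * tU a) b = act u (b * sU a))
    \<comment> \<open>left U-action\<close>
   \<and> (\<forall>b\<in>B. act 1 b = b)
   \<and> (\<forall>u v. \<forall>b\<in>B. act (u * v) b = act u (act v b))
    \<comment> \<open>module algebra\<close>
   \<and> (\<forall>u. act u 1 = sU (\<epsilon>U u))
   \<and> (\<forall>u. \<forall>b\<in>B. \<forall>b'\<in>B.
        act u (b * b') = sum_list (map (\<lambda>(x1, x2). act x1 b * act x2 b') (\<Delta>U u)))"
  proof -
  interpret L: LHK \<iota> sU tU \<Delta>U \<epsilon>U sV tV \<Delta>V \<epsilon>V \<pi>
    by (rule LHK.intro[OF HU HV mor surj])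
  have Bd: "B = L.Bk" by (simp add: B_def L.Bk_def)
  have actd: "\<And>u b. act u b = hact sU tU \<Delta>U u b" by (simp add: act_def)
  have BC: "\<And>b. b \<in> B \<Longrightarrow> b \<in> L.Cm" using L.B_Cm Bd by simp
  have cen: "\<And>c u b. act u (sU (\<iota> c) * b) = sU (\<iota> c) * act u b"
  proof -
    fix c u b
    have el: "x * (sU (\<iota> c) * b) * y = sU (\<iota> c) * (x * b * y)" for x y
      by (metis L.central mult.assoc)
    have "L.ev xs (sU (\<iota> c) * b) = sU (\<iota> c) * L.ev xs b" for xs
      by (induct xs) (auto simp: L.ev_def distrib_left el)
    then show "act u (sU (\<iota> c) * b) = sU (\<iota> c) * act u b" by (simp add: actd L.A_def')
  qed
  show ?thesis
    unfolding Bd actd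
  proof (intro conjI ballI allI impI)
    show "1 \<in> L.Bk" by (rule L.one_B)
  next
    fix b b' assume "b \<in> L.Bk" "b' \<in> L.Bk" then show "b + b' \<in> L.Bk" by (rule L.add_B)
  next
    fix b b' assume "b \<in> L.Bk" "b' \<in> L.Bk" then show "b * b' \<in> L.Bk" by (rule L.mult_B)
  next
    fix b assume "b \<in> L.Bk" then show "- b \<in> L.Bk" by (rule L.neg_B)
  next
    fix a show "sU a \<in> L.Bk" by (rule L.s_B)
  next
    fix b a assume "b \<in> L.Bk" then show "tU a * b = b * tU a" by (rule L.B_comm)
  next
    fix u xs ys b
    assume "b \<in> L.Bk" "teqA tU sU (galois_map \<Delta>U xs) [(u, 1)]" "teqA tU sU (galois_map \<Delta>U ys) [(u, 1)]"
    then show "(\<Sum>(x, y)\<leftarrow>xs. x * b * y) = (\<Sum>(x, y)\<leftarrow>ys. x * b * y)"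
      using L.welldef[OF L.B_Cm] unfolding L.tr_def L.ev_def by blast
  next
    fix u b assume "b \<in> L.Bk" then show "hact sU tU \<Delta>U u b \<in> L.Bk" by (rule L.act_B)
  next
    fix u u' b assume "b \<in> L.Bk" then show "hact sU tU \<Delta>U (u + u') b = hact sU tU \<Delta>U u b + hact sU tU \<Delta>U u' b"
      by (rule L.act_add_u[OF L.B_Cm])
  next
    fix u b b' show "hact sU tU \<Delta>U u (b + b') = hact sU tU \<Delta>U u b + hact sU tU \<Delta>U u b'" by (rule L.act_add_b)
  next
    fix c u b assume "b \<in> L.Bk" then show "hact sU tU \<Delta>U (sU (\<iota> c) * u) b = sU (\<iota> c) * hact sU tU \<Delta>U u b"
      by (rule L.act_sl[OF L.B_Cm])
  next
    fix c u b show "hact sU tU \<Delta>U u (sU (\<iota> c) * b) = sU (\<iota> c) * hact sU tU \<Delta>U u b"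
      using cen by (simp add: actd)
  next
    fix u a b assume "b \<in> L.Bk" then show "hact sU tU \<Delta>U (u * sU a) b = hact sU tU \<Delta>U u (sU a * b)"
      by (rule L.act_sr[OF L.B_Cm])
  next
    fix u a b assume "b \<in> L.Bk" then show "hact sU tU \<Delta>U (u * tU a) b = hact sU tU \<Delta>U u (b * sU a)"
      by (rule L.act_tr[OF L.B_Cm])
  next
    fix b assume "b \<in> L.Bk" then show "hact sU tU \<Delta>U 1 b = b" by (rule L.act_one[OF L.B_Cm])
  next
    fix u v b assume "b \<in> L.Bk" then show "hact sU tU \<Delta>U (u * v) b = hact sU tU \<Delta>U u (hact sU tU \<Delta>U v b)"
      by (rule L.act_mult[OF L.B_Cm])
  next
    fix u show "hact sU tU \<Delta>U u 1 = sU (\<epsilon>U u)" by (rule L.act_unit)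
  next
    fix u b b' assume "b \<in> L.Bk" "b' \<in> L.Bk"
    then show "hact sU tU \<Delta>U u (b * b') = (\<Sum>(x1, x2)\<leftarrow>\<Delta>U u. hact sU tU \<Delta>U x1 b * hact sU tU \<Delta>U x2 b')"
      by (intro L.modalg L.B_Cm)
  qed
qed

end
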